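(* The map $\Psi:\mathcal{FL}_{\mathrm{T}}\to\mathcal{D}^+_{\mathrm{T}}$, $[\mathcal{F}]\mapsto (t^{\mathcal{F}}_\ast,e^{\mathcal{F}}_\ast)$, is a homeomorphism. Moreover $\mathcal{D}^+_{\mathrm{T}}$ is homeomorphic to $\mathbb{R}^5_{>0}$ via $(t_\ast,e_\ast)\mapsto(e_{12},e_{13},e_{23},e_{14},e_{24})$; hence $\mathcal{FL}_{\mathrm{T}}\cong\mathbb{R}^5_{>0}$.
   Context: Flags in $\mathbb{RP}^3$ are pairs $(V,\eta)$, $\eta$ a plane through the point $V$; a tuple is non-degenerate if $\eta_i(V_j)=0\iff i=j$. A tetrahedron of flags is a non-degenerate ordered quadruple $(V_m,\eta_m)_{m=1}^4$ with the $V_m$ not coplanar such that some projective tetrahedron with vertices $V_1,\dots,V_4$ has interior disjoint from all $\eta_m$. $\mathcal{FL}_{\mathrm{T}}$ is the set of tetrahedra of flags modulo the diagonal action of $\mathrm{PGL}(4)$, with the quotient topology. $(\mathrm{E})\mathrm{F}$ is the set of edge-faces $\sigma=(ij)k$, identified with even permutations $[ijkl]$ of $\{1,2,3,4\}$; $\sigma_+=(ki)j$, $\sigma_-=(jk)i$, $\bar\sigma=(ji)l$, $\mathrm{op}\,\sigma=(lk)j$. Triple ratio $t_\sigma=\frac{\bar\eta_i(\bar V_j)\bar\eta_j(\bar V_k)\bar\eta_k(\bar V_i)}{\bar\eta_i(\bar V_k)\bar\eta_j(\bar V_i)\bar\eta_k(\bar V_j)}$, edge ratio $e_\sigma=e_{ij}=\frac{\bar\eta_i(\bar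 V_k)\bar\eta_j(\bar V_l)}{\bar\eta_i(\bar V_l)\bar\eta_j(\bar V_k)}$. $\mathcal{D}^+_{\mathrm{T}}$ is the set of pairs $(t_\ast,e_\ast)$ of functions $(\mathrm{E})\mathrm{F}\to\mathbb{R}_{>0}$ satisfying, for all $\sigma$: $t_\sigma=t_{\sigma_+}=t_{\sigma_-}$, $e_\sigma=e_{\bar\sigma}$, $t_\sigma e_\sigma e_{\sigma_+}e_{\sigma_-}=1$, and $t_\sigma=e_{\mathrm{op}\sigma}e_{\mathrm{op}(\sigma_+)}e_{\mathrm{op}(\sigma_-)}$; it carries the subspace topology of $\mathbb{R}^{24}$. *)

theory Defs
  imports "HOL-Analysis.Analysis" "HOL-Combinatorics.Permutations"
begin

definition quotient_topology :: "'a topology \<Rightarrow> ('a \<Rightarrow> 'b) \<Rightarrow> 'b topology" where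
  "quotient_topology X f =
     topology (\<lambda>U. U \<subseteq> f ` topspace X \<and> openin X {x \<in> topspace X. f x \<in> U})"

lemma istopology_quotient:
  "istopology (\<lambda>U. U \<subseteq> f ` topspace X \<and> openin X {x \<in> topspace X. f x \<in> U})"
proof -
  have I: "openin X {x \<in> topspace X. f x \<in> S \<inter> T}"
    if "openin X {x \<in> topspace X. f x \<in> S}" "openin X {x \<in> topspace X. f x \<in> T}" for S T
  proof -
    have "{x \<in> topspace X. f x \<in> S \<inter> T} =
          {x \<in> topspace X. f x \<in> S} \<inter> {x \<in> topspace X. f x \<in> T}" by auto
    then show ?thesis using that by (simp add: openin_Int)
  qed
  have U: "openin X {x \<in> topspace X. f x \<in> \<Union>K}"
    if "\<forall>S\<in>K. openin X {x \<in> topspace X. f x \<in> S}" for K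
  proof -
    have "{x \<in> topspace X. f x \<in> \<Union>K} = (\<Union>S\<in>K. {x \<in> topspace X. f x \<in> S})" by auto
    then show ?thesis using that by (auto intro!: openin_Union)
  qed
  show ?thesis
    unfolding istopology_def using I U by blast
qed

lemma openin_quotient_topology:
  "openin (quotient_topology X f) U \<longleftrightarrow>
     U \<subseteq> f ` topspace X \<and> openin X {x \<in> topspace X. f x \<in> U}"
  unfolding quotient_topology_def
  by (simp add: topology_inverse'[OF istopology_quotient])

text \<open>Indices of the four flags are 1,2,3,4.  A point V of RP^3 is represented by a
nonzero vector in R^4, a plane eta by a nonzero covector, also written as a vector of R^4;
eta(V) is the dot product.\<close>

type_synonym cfg = "(nat \<Rightarrow> real^4) \<times> (nat \<Rightarrow> real^4)"

definition idx :: "nat set" where "idx = {1..4}"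

definition is_tetrahedron_of_flags :: "cfg \<Rightarrow> bool" where
  "is_tetrahedron_of_flags F \<longleftrightarrow>
     (let V = fst F; \<eta> = snd F in
       V \<in> PiE idx (\<lambda>_. UNIV) \<and> \<eta> \<in> PiE idx (\<lambda>_. UNIV) \<and>
       (\<forall>i\<in>idx. V i \<noteq> 0 \<and> \<eta> i \<noteq> 0) \<and>
       \<comment> \<open>flags, and non-degeneracy: eta_i(V_j) = 0 iff i = j\<close>
       (\<forall>i\<in>idx. \<forall>j\<in>idx. (\<eta> i \<bullet> V j) = 0 \<longleftrightarrow> i = j) \<and>
       \<comment> \<open>the V_m are not coplanar\<close>
       independent (V ` idx) \<and> card (V ` idx) = 4 \<and>
       \<comment> \<open>some projective tetrahedron with vertices V_1..V_4 (i.e. the image in RP^3 of a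
          cone spanned by s_1 V_1, ..., s_4 V_4 for signs s_i) has interior disjoint from
          every plane eta_m\<close>
       (\<exists>s. (\<forall>i\<in>idx. s i = 1 \<or> s i = -1) \<and>
          (\<forall>m\<in>idx. \<forall>w. (\<forall>i\<in>idx. w i > 0) \<longrightarrow>
              \<eta> m \<bullet> (\<Sum>i\<in>idx. (w i * s i) *\<^sub>R V i) \<noteq> 0)))"

definition TetCfg :: "cfg set" where
  "TetCfg = {F. is_tetrahedron_of_flags F}"

text \<open>Two representatives define the same point of FL_T iff they differ by rescaling the
representatives and by the diagonal action of PGL(4) (V \<mapsto> A V, eta \<mapsto> eta o A^-1).\<close>

definition cfg_equiv :: "cfg \<Rightarrow> cfg \<Rightarrow> bool" where
  "cfg_equiv F G \<longleftrightarrow>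
     (\<exists>A :: real^4^4. invertible A \<and>
        (\<exists>a b :: nat \<Rightarrow> real. \<forall>i\<in>idx. a i \<noteq> 0 \<and> b i \<noteq> 0 \<and>
            fst G i = a i *\<^sub>R (A *v fst F i) \<and>
            snd G i = b i *\<^sub>R (snd F i v* matrix_inv A)))"

definition cfg_class :: "cfg \<Rightarrow> cfg set" where
  "cfg_class F = {G \<in> TetCfg. cfg_equiv F G}"

definition cfg_top :: "cfg topology" where
  "cfg_top = subtopology
     (prod_topology (product_topology (\<lambda>_. euclidean) idx) (product_topology (\<lambda>_. euclidean) idx))
     TetCfg"

definition FL_T :: "cfg set topology" where
  "FL_T = quotient_topology cfg_top cfg_class"

text \<open>An edge-face sigma = (ij)k is the triple (i,j,k); l is the remaining index, and
(ij)k is an edge-face iff [ijkl] is an even permutation of {1,2,3,4}.\<close>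

definition fourth :: "nat \<Rightarrow> nat \<Rightarrow> nat \<Rightarrow> nat" where
  "fourth i j k = the_elem (idx - {i, j, k})"

definition perm_of :: "nat \<times> nat \<times> nat \<Rightarrow> nat \<Rightarrow> nat" where
  "perm_of \<sigma> = (case \<sigma> of (i, j, k) \<Rightarrow>
     (\<lambda>m. if m = 1 then i else if m = 2 then j else if m = 3 then k
          else if m = 4 then fourth i j k else m))"

definition EF :: "(nat \<times> nat \<times> nat) set" where
  "EF = {(i, j, k). i \<in> idx \<and> j \<in> idx \<and> k \<in> idx \<and> distinct [i, j, k] \<and>
                    evenperm (perm_of (i, j, k))}"

definition sigma_plus :: "nat \<times> nat \<times> nat \<Rightarrow> nat \<times> nat \<times> nat" where
  "sigma_plus \<sigma> = (case \<sigma> of (i, j, k) \<Rightarrow> (k, i, j))"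

definition sigma_minus :: "nat \<times> nat \<times> nat \<Rightarrow> nat \<times> nat \<times> nat" where
  "sigma_minus \<sigma> = (case \<sigma> of (i, j, k) \<Rightarrow> (j, k, i))"

definition sigma_bar :: "nat \<times> nat \<times> nat \<Rightarrow> nat \<times> nat \<times> nat" where
  "sigma_bar \<sigma> = (case \<sigma> of (i, j, k) \<Rightarrow> (j, i, fourth i j k))"

definition sigma_op :: "nat \<times> nat \<times> nat \<Rightarrow> nat \<times> nat \<times> nat" where
  "sigma_op \<sigma> = (case \<sigma> of (i, j, k) \<Rightarrow> (fourth i j k, k, j))"

definition triple_ratio :: "cfg \<Rightarrow> nat \<times> nat \<times> nat \<Rightarrow> real" where
  "triple_ratio F \<sigma> = (case \<sigma> of (i, j, k) \<Rightarrow>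
     (let V = fst F; \<eta> = snd F in
       ((\<eta> i \<bullet> V j) * (\<eta> j \<bullet> V k) * (\<eta> k \<bullet> V i)) /
       ((\<eta> i \<bullet> V k) * (\<eta> j \<bullet> V i) * (\<eta> k \<bullet> V j))))"

definition edge_ratio :: "cfg \<Rightarrow> nat \<times> nat \<times> nat \<Rightarrow> real" where
  "edge_ratio F \<sigma> = (case \<sigma> of (i, j, k) \<Rightarrow>
     (let V = fst F; \<eta> = snd F; l = fourth i j k in
       ((\<eta> i \<bullet> V k) * (\<eta> j \<bullet> V l)) / ((\<eta> i \<bullet> V l) * (\<eta> j \<bullet> V k))))"

type_synonym coords = "(nat \<times> nat \<times> nat \<Rightarrow> real) \<times> (nat \<times> nat \<times> nat \<Rightarrow> real)"

definition Dplus_T :: "coords set" where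
  "Dplus_T = {(t, e). t \<in> PiE EF (\<lambda>_. UNIV) \<and> e \<in> PiE EF (\<lambda>_. UNIV) \<and>
     (\<forall>\<sigma>\<in>EF. t \<sigma> > 0 \<and> e \<sigma> > 0 \<and>
        t \<sigma> = t (sigma_plus \<sigma>) \<and> t \<sigma> = t (sigma_minus \<sigma>) \<and>
        e \<sigma> = e (sigma_bar \<sigma>) \<and>
        t \<sigma> * e \<sigma> * e (sigma_plus \<sigma>) * e (sigma_minus \<sigma>) = 1 \<and>
        t \<sigma> = e (sigma_op \<sigma>) * e (sigma_op (sigma_plus \<sigma>)) * e (sigma_op (sigma_minus \<sigma>)))}"

definition Dplus_top :: "coords topology" where
  "Dplus_top = subtopology
     (prod_topology (product_topology (\<lambda>_. euclideanreal) EF)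
                    (product_topology (\<lambda>_. euclideanreal) EF))
     Dplus_T"

definition Psi :: "cfg set \<Rightarrow> coords" where
  "Psi C = (let F = (SOME F. F \<in> C) in
              (restrict (triple_ratio F) EF, restrict (edge_ratio F) EF))"

text \<open>e_ij is e_sigma for the unique edge-face sigma = (ij)k:
  e_12 = e_(12)3, e_13 = e_(13)4, e_23 = e_(23)1, e_14 = e_(14)2, e_24 = e_(24)3.\<close>

definition edge_coords :: "coords \<Rightarrow> real \<times> real \<times> real \<times> real \<times> real" where
  "edge_coords te = (let e = snd te in
     (e (1,2,3), e (1,3,4), e (2,3,1), e (1,4,2), e (2,4,3)))"

definition R5pos :: "(real \<times> real \<times> real \<times> real \<times> real) topology" where
  "R5pos = subtopology euclidean
     {(a, b, c, d, f). a > 0 \<and> b > 0 \<and> c > 0 \<and> d > 0 \<and> f > 0}"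

end

theory Submission
  imports Defs
begin

lemma idx4: "idx = {1,2,3,4}" unfolding idx_def by auto
lemma fourth_123: "fourth 1 2 3 = 4" by (simp add: fourth_def idx4 insert_Diff_if)
lemma fourth_124: "fourth 1 2 4 = 3" by (simp add: fourth_def idx4 insert_Diff_if)
lemma fourth_132: "fourth 1 3 2 = 4" by (simp add: fourth_def idx4 insert_Diff_if)
lemma fourth_134: "fourth 1 3 4 = 2" by (simp add: fourth_def idx4 insert_Diff_if)
lemma fourth_142: "fourth 1 4 2 = 3" by (simp add: fourth_def idx4 insert_Diff_if)
lemma fourth_143: "fourth 1 4 3 = 2" by (simp add: fourth_def idx4 insert_Diff_if)
lemma fourth_213: "fourth 2 1 3 = 4" by (simp add: fourth_def idx4 insert_Diff_if)
lemma fourth_214: "fourth 2 1 4 = 3" by (simp add: fourth_def idx4 insert_Diff_if)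
lemma fourth_231: "fourth 2 3 1 = 4" by (simp add: fourth_def idx4 insert_Diff_if)
lemma fourth_234: "fourth 2 3 4 = 1" by (simp add: fourth_def idx4 insert_Diff_if)
lemma fourth_241: "fourth 2 4 1 = 3" by (simp add: fourth_def idx4 insert_Diff_if)
lemma fourth_243: "fourth 2 4 3 = 1" by (simp add: fourth_def idx4 insert_Diff_if)
lemma fourth_312: "fourth 3 1 2 = 4" by (simp add: fourth_def idx4 insert_Diff_if)
lemma fourth_314: "fourth 3 1 4 = 2" by (simp add: fourth_def idx4 insert_Diff_if)
lemma fourth_321: "fourth 3 2 1 = 4" by (simp add: fourth_def idx4 insert_Diff_if)
lemma fourth_324: "fourth 3 2 4 = 1" by (simp add: fourth_def idx4 insert_Diff_if)
lemma fourth_341: "fourth 3 4 1 = 2" by (simp add: fourth_def idx4 insert_Diff_if)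
lemma fourth_342: "fourth 3 4 2 = 1" by (simp add: fourth_def idx4 insert_Diff_if)
lemma fourth_412: "fourth 4 1 2 = 3" by (simp add: fourth_def idx4 insert_Diff_if)
lemma fourth_413: "fourth 4 1 3 = 2" by (simp add: fourth_def idx4 insert_Diff_if)
lemma fourth_421: "fourth 4 2 1 = 3" by (simp add: fourth_def idx4 insert_Diff_if)
lemma fourth_423: "fourth 4 2 3 = 1" by (simp add: fourth_def idx4 insert_Diff_if)
lemma fourth_431: "fourth 4 3 1 = 2" by (simp add: fourth_def idx4 insert_Diff_if)
lemma fourth_432: "fourth 4 3 2 = 1" by (simp add: fourth_def idx4 insert_Diff_if)
lemmas fourth_simps[simp] = fourth_123 fourth_124 fourth_132 fourth_134 fourth_142 fourth_143 fourth_213 fourth_214 fourth_231 fourth_234 fourth_241 fourth_243 fourth_312 fourth_314 fourth_321 fourth_324 fourth_341 fourth_342 fourth_412 fourth_413 fourth_421 fourth_423 fourth_431 fourth_432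
lemma fourthS_123: "fourth (Suc 0) 2 3 = 4" using fourth_123 by simp
lemma fourthS_124: "fourth (Suc 0) 2 4 = 3" using fourth_124 by simp
lemma fourthS_132: "fourth (Suc 0) 3 2 = 4" using fourth_132 by simp
lemma fourthS_134: "fourth (Suc 0) 3 4 = 2" using fourth_134 by simp
lemma fourthS_142: "fourth (Suc 0) 4 2 = 3" using fourth_142 by simp
lemma fourthS_143: "fourth (Suc 0) 4 3 = 2" using fourth_143 by simp
lemma fourthS_213: "fourth 2 (Suc 0) 3 = 4" using fourth_213 by simp
lemma fourthS_214: "fourth 2 (Suc 0) 4 = 3" using fourth_214 by simp
lemma fourthS_231: "fourth 2 3 (Suc 0) = 4" using fourth_231 by simp
lemma fourthS_241: "fourth 2 4 (Suc 0) = 3" using fourth_241 by simp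
lemma fourthS_312: "fourth 3 (Suc 0) 2 = 4" using fourth_312 by simp
lemma fourthS_314: "fourth 3 (Suc 0) 4 = 2" using fourth_314 by simp
lemma fourthS_321: "fourth 3 2 (Suc 0) = 4" using fourth_321 by simp
lemma fourthS_341: "fourth 3 4 (Suc 0) = 2" using fourth_341 by simp
lemma fourthS_412: "fourth 4 (Suc 0) 2 = 3" using fourth_412 by simp
lemma fourthS_413: "fourth 4 (Suc 0) 3 = 2" using fourth_413 by simp
lemma fourthS_421: "fourth 4 2 (Suc 0) = 3" using fourth_421 by simp
lemma fourthS_431: "fourth 4 3 (Suc 0) = 2" using fourth_431 by simp
lemmas fourthS_simps[simp] = fourthS_123 fourthS_124 fourthS_132 fourthS_134 fourthS_142 fourthS_143 fourthS_213 fourthS_214 fourthS_231 fourthS_241 fourthS_312 fourthS_314 fourthS_321 fourthS_341 fourthS_412 fourthS_413 fourthS_421 fourthS_431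
lemma evp_123[simp]: "evenperm (perm_of (1,2,3)) = True"
proof -
  have "perm_of (1,2,3) = apply_transps ([]::(nat*nat) list)"
    unfolding perm_of_def prod.case fourth_123 by (auto simp: fun_eq_iff transpose_def apply_transps_def)
  then show ?thesis using evenperm_apply_transps_iff[of "[]::(nat*nat) list"] by simp
qed
lemma evp_124[simp]: "evenperm (perm_of (1,2,4)) = False"
proof -
  have "perm_of (1,2,4) = apply_transps ([(3,4)]::(nat*nat) list)"
    unfolding perm_of_def prod.case fourth_124 by (auto simp: fun_eq_iff transpose_def apply_transps_def)
  then show ?thesis using evenperm_apply_transps_iff[of "[(3,4)]::(nat*nat) list"] by simp
qed
lemma evp_132[simp]: "evenperm (perm_of (1,3,2)) = False"
proof -
  have "perm_of (1,3,2) = apply_transps ([(2,3)]::(nat*nat) list)"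
    unfolding perm_of_def prod.case fourth_132 by (auto simp: fun_eq_iff transpose_def apply_transps_def)
  then show ?thesis using evenperm_apply_transps_iff[of "[(2,3)]::(nat*nat) list"] by simp
qed
lemma evp_134[simp]: "evenperm (perm_of (1,3,4)) = True"
proof -
  have "perm_of (1,3,4) = apply_transps ([(2,3),(3,4)]::(nat*nat) list)"
    unfolding perm_of_def prod.case fourth_134 by (auto simp: fun_eq_iff transpose_def apply_transps_def)
  then show ?thesis using evenperm_apply_transps_iff[of "[(2,3),(3,4)]::(nat*nat) list"] by simp
qed
lemma evp_142[simp]: "evenperm (perm_of (1,4,2)) = True"
proof -
  have "perm_of (1,4,2) = apply_transps ([(2,4),(3,4)]::(nat*nat) list)"
    unfolding perm_of_def prod.case fourth_142 by (auto simp: fun_eq_iff transpose_def apply_transps_def)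
  then show ?thesis using evenperm_apply_transps_iff[of "[(2,4),(3,4)]::(nat*nat) list"] by simp
qed
lemma evp_143[simp]: "evenperm (perm_of (1,4,3)) = False"
proof -
  have "perm_of (1,4,3) = apply_transps ([(2,4)]::(nat*nat) list)"
    unfolding perm_of_def prod.case fourth_143 by (auto simp: fun_eq_iff transpose_def apply_transps_def)
  then show ?thesis using evenperm_apply_transps_iff[of "[(2,4)]::(nat*nat) list"] by simp
qed
lemma evp_213[simp]: "evenperm (perm_of (2,1,3)) = False"
proof -
  have "perm_of (2,1,3) = apply_transps ([(1,2)]::(nat*nat) list)"
    unfolding perm_of_def prod.case fourth_213 by (auto simp: fun_eq_iff transpose_def apply_transps_def)
  then show ?thesis using evenperm_apply_transps_iff[of "[(1,2)]::(nat*nat) list"] by simp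
qed
lemma evp_214[simp]: "evenperm (perm_of (2,1,4)) = True"
proof -
  have "perm_of (2,1,4) = apply_transps ([(1,2),(3,4)]::(nat*nat) list)"
    unfolding perm_of_def prod.case fourth_214 by (auto simp: fun_eq_iff transpose_def apply_transps_def)
  then show ?thesis using evenperm_apply_transps_iff[of "[(1,2),(3,4)]::(nat*nat) list"] by simp
qed
lemma evp_231[simp]: "evenperm (perm_of (2,3,1)) = True"
proof -
  have "perm_of (2,3,1) = apply_transps ([(1,2),(2,3)]::(nat*nat) list)"
    unfolding perm_of_def prod.case fourth_231 by (auto simp: fun_eq_iff transpose_def apply_transps_def)
  then show ?thesis using evenperm_apply_transps_iff[of "[(1,2),(2,3)]::(nat*nat) list"] by simp
qed
lemma evp_234[simp]: "evenperm (perm_of (2,3,4)) = False"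
proof -
  have "perm_of (2,3,4) = apply_transps ([(1,2),(2,3),(3,4)]::(nat*nat) list)"
    unfolding perm_of_def prod.case fourth_234 by (auto simp: fun_eq_iff transpose_def apply_transps_def)
  then show ?thesis using evenperm_apply_transps_iff[of "[(1,2),(2,3),(3,4)]::(nat*nat) list"] by simp
qed
lemma evp_241[simp]: "evenperm (perm_of (2,4,1)) = False"
proof -
  have "perm_of (2,4,1) = apply_transps ([(1,2),(2,4),(3,4)]::(nat*nat) list)"
    unfolding perm_of_def prod.case fourth_241 by (auto simp: fun_eq_iff transpose_def apply_transps_def)
  then show ?thesis using evenperm_apply_transps_iff[of "[(1,2),(2,4),(3,4)]::(nat*nat) list"] by simp
qed
lemma evp_243[simp]: "evenperm (perm_of (2,4,3)) = True"
proof -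
  have "perm_of (2,4,3) = apply_transps ([(1,2),(2,4)]::(nat*nat) list)"
    unfolding perm_of_def prod.case fourth_243 by (auto simp: fun_eq_iff transpose_def apply_transps_def)
  then show ?thesis using evenperm_apply_transps_iff[of "[(1,2),(2,4)]::(nat*nat) list"] by simp
qed
lemma evp_312[simp]: "evenperm (perm_of (3,1,2)) = True"
proof -
  have "perm_of (3,1,2) = apply_transps ([(1,3),(2,3)]::(nat*nat) list)"
    unfolding perm_of_def prod.case fourth_312 by (auto simp: fun_eq_iff transpose_def apply_transps_def)
  then show ?thesis using evenperm_apply_transps_iff[of "[(1,3),(2,3)]::(nat*nat) list"] by simp
qed
lemma evp_314[simp]: "evenperm (perm_of (3,1,4)) = False"
proof -
  have "perm_of (3,1,4) = apply_transps ([(1,3),(2,3),(3,4)]::(nat*nat) list)"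
    unfolding perm_of_def prod.case fourth_314 by (auto simp: fun_eq_iff transpose_def apply_transps_def)
  then show ?thesis using evenperm_apply_transps_iff[of "[(1,3),(2,3),(3,4)]::(nat*nat) list"] by simp
qed
lemma evp_321[simp]: "evenperm (perm_of (3,2,1)) = False"
proof -
  have "perm_of (3,2,1) = apply_transps ([(1,3)]::(nat*nat) list)"
    unfolding perm_of_def prod.case fourth_321 by (auto simp: fun_eq_iff transpose_def apply_transps_def)
  then show ?thesis using evenperm_apply_transps_iff[of "[(1,3)]::(nat*nat) list"] by simp
qed
lemma evp_324[simp]: "evenperm (perm_of (3,2,4)) = True"
proof -
  have "perm_of (3,2,4) = apply_transps ([(1,3),(3,4)]::(nat*nat) list)"
    unfolding perm_of_def prod.case fourth_324 by (auto simp: fun_eq_iff transpose_def apply_transps_def)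
  then show ?thesis using evenperm_apply_transps_iff[of "[(1,3),(3,4)]::(nat*nat) list"] by simp
qed
lemma evp_341[simp]: "evenperm (perm_of (3,4,1)) = True"
proof -
  have "perm_of (3,4,1) = apply_transps ([(1,3),(2,4)]::(nat*nat) list)"
    unfolding perm_of_def prod.case fourth_341 by (auto simp: fun_eq_iff transpose_def apply_transps_def)
  then show ?thesis using evenperm_apply_transps_iff[of "[(1,3),(2,4)]::(nat*nat) list"] by simp
qed
lemma evp_342[simp]: "evenperm (perm_of (3,4,2)) = False"
proof -
  have "perm_of (3,4,2) = apply_transps ([(1,3),(2,4),(3,4)]::(nat*nat) list)"
    unfolding perm_of_def prod.case fourth_342 by (auto simp: fun_eq_iff transpose_def apply_transps_def)
  then show ?thesis using evenperm_apply_transps_iff[of "[(1,3),(2,4),(3,4)]::(nat*nat) list"] by simp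
qed
lemma evp_412[simp]: "evenperm (perm_of (4,1,2)) = False"
proof -
  have "perm_of (4,1,2) = apply_transps ([(1,4),(2,4),(3,4)]::(nat*nat) list)"
    unfolding perm_of_def prod.case fourth_412 by (auto simp: fun_eq_iff transpose_def apply_transps_def)
  then show ?thesis using evenperm_apply_transps_iff[of "[(1,4),(2,4),(3,4)]::(nat*nat) list"] by simp
qed
lemma evp_413[simp]: "evenperm (perm_of (4,1,3)) = True"
proof -
  have "perm_of (4,1,3) = apply_transps ([(1,4),(2,4)]::(nat*nat) list)"
    unfolding perm_of_def prod.case fourth_413 by (auto simp: fun_eq_iff transpose_def apply_transps_def)
  then show ?thesis using evenperm_apply_transps_iff[of "[(1,4),(2,4)]::(nat*nat) list"] by simp
qed
lemma evp_421[simp]: "evenperm (perm_of (4,2,1)) = True"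
proof -
  have "perm_of (4,2,1) = apply_transps ([(1,4),(3,4)]::(nat*nat) list)"
    unfolding perm_of_def prod.case fourth_421 by (auto simp: fun_eq_iff transpose_def apply_transps_def)
  then show ?thesis using evenperm_apply_transps_iff[of "[(1,4),(3,4)]::(nat*nat) list"] by simp
qed
lemma evp_423[simp]: "evenperm (perm_of (4,2,3)) = False"
proof -
  have "perm_of (4,2,3) = apply_transps ([(1,4)]::(nat*nat) list)"
    unfolding perm_of_def prod.case fourth_423 by (auto simp: fun_eq_iff transpose_def apply_transps_def)
  then show ?thesis using evenperm_apply_transps_iff[of "[(1,4)]::(nat*nat) list"] by simp
qed
lemma evp_431[simp]: "evenperm (perm_of (4,3,1)) = False"
proof -
  have "perm_of (4,3,1) = apply_transps ([(1,4),(2,3),(3,4)]::(nat*nat) list)"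
    unfolding perm_of_def prod.case fourth_431 by (auto simp: fun_eq_iff transpose_def apply_transps_def)
  then show ?thesis using evenperm_apply_transps_iff[of "[(1,4),(2,3),(3,4)]::(nat*nat) list"] by simp
qed
lemma evp_432[simp]: "evenperm (perm_of (4,3,2)) = True"
proof -
  have "perm_of (4,3,2) = apply_transps ([(1,4),(2,3)]::(nat*nat) list)"
    unfolding perm_of_def prod.case fourth_432 by (auto simp: fun_eq_iff transpose_def apply_transps_def)
  then show ?thesis using evenperm_apply_transps_iff[of "[(1,4),(2,3)]::(nat*nat) list"] by simp
qed
lemma EF_eq: "EF = {(1,2,3), (1,3,4), (1,4,2), (2,1,4), (2,3,1), (2,4,3), (3,1,2), (3,2,4), (3,4,1), (4,1,3), (4,2,1), (4,3,2)}"
  (is "_ = ?S")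
proof
  show "EF \<subseteq> ?S"
  proof
    fix x assume "x \<in> EF"
    then obtain i j k where x: "x = (i,j,k)" and h: "i \<in> idx" "j \<in> idx" "k \<in> idx" "distinct [i,j,k]"
      "evenperm (perm_of (i,j,k))" unfolding EF_def by blast
    have "i = 1 \<or> i = 2 \<or> i = 3 \<or> i = 4" "j = 1 \<or> j = 2 \<or> j = 3 \<or> j = 4"
      "k = 1 \<or> k = 2 \<or> k = 3 \<or> k = 4" using h(1-3) unfolding idx4 by blast+
    then show "x \<in> ?S" using h(4,5) unfolding x
      by (elim disjE; simp only: evp_123 evp_132 evp_124 evp_142 evp_134 evp_143 evp_213 evp_231 evp_214 evp_241 evp_234 evp_243
          evp_312 evp_321 evp_314 evp_341 evp_324 evp_342 evp_412 evp_421 evp_413 evp_431 evp_423 evp_432; simp)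
  qed
  show "?S \<subseteq> EF" unfolding EF_def
    by (simp only: insert_subset empty_subsetI mem_Collect_eq case_prod_conv evp_123 evp_132 evp_124 evp_142 evp_134 evp_143 evp_213 evp_231 evp_214 evp_241 evp_234 evp_243 evp_312 evp_321 evp_314 evp_341 evp_324 evp_342 evp_412 evp_421 evp_413 evp_431 evp_423 evp_432) (simp add: idx4)
qed

definition S5 :: "(real \<times> real \<times> real \<times> real \<times> real) set" where
  "S5 = {(a, b, c, d, f). a > 0 \<and> b > 0 \<and> c > 0 \<and> d > 0 \<and> f > 0}"

lemma topspace_R5pos: "topspace R5pos = S5"
  unfolding R5pos_def S5_def by simp

definition ev5 :: "real \<times> real \<times> real \<times> real \<times> real \<Rightarrow> nat \<Rightarrow> nat \<Rightarrow> real" where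
  "ev5 p x y = (case p of (a, b, c, d, f) \<Rightarrow>
     if (x = 1 \<and> y = 2) \<or> (x = 2 \<and> y = 1) then a
     else if (x = 1 \<and> y = 3) \<or> (x = 3 \<and> y = 1) then b
     else if (x = 2 \<and> y = 3) \<or> (x = 3 \<and> y = 2) then c
     else if (x = 1 \<and> y = 4) \<or> (x = 4 \<and> y = 1) then d
     else if (x = 2 \<and> y = 4) \<or> (x = 4 \<and> y = 2) then f
     else 1 / (a * b * c * d * f))"

definition coords_of :: "real \<times> real \<times> real \<times> real \<times> real \<Rightarrow> coords" where
  "coords_of p = (restrict (\<lambda>(i, j, k). 1 / (ev5 p i j * ev5 p j k * ev5 p k i)) EF,
                  restrict (\<lambda>(i, j, k). ev5 p i j) EF)"

lemma sigma_simps[simp]: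
  "sigma_plus (i,j,k) = (k,i,j)" "sigma_minus (i,j,k) = (j,k,i)"
  "sigma_bar (i,j,k) = (j,i,fourth i j k)" "sigma_op (i,j,k) = (fourth i j k, k, j)"
  by (simp_all add: sigma_plus_def sigma_minus_def sigma_bar_def sigma_op_def)

lemma ev5_12n: "ev5 (a,b,c,d,f) 1 2 = a" by (simp add: ev5_def)
lemma ev5_12s: "ev5 (a,b,c,d,f) (Suc 0) 2 = a" by (simp add: ev5_def)
lemma ev5_21n: "ev5 (a,b,c,d,f) 2 1 = a" by (simp add: ev5_def)
lemma ev5_21s: "ev5 (a,b,c,d,f) 2 (Suc 0) = a" by (simp add: ev5_def)
lemma ev5_13n: "ev5 (a,b,c,d,f) 1 3 = b" by (simp add: ev5_def)
lemma ev5_13s: "ev5 (a,b,c,d,f) (Suc 0) 3 = b" by (simp add: ev5_def)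
lemma ev5_31n: "ev5 (a,b,c,d,f) 3 1 = b" by (simp add: ev5_def)
lemma ev5_31s: "ev5 (a,b,c,d,f) 3 (Suc 0) = b" by (simp add: ev5_def)
lemma ev5_23n: "ev5 (a,b,c,d,f) 2 3 = c" by (simp add: ev5_def)
lemma ev5_32n: "ev5 (a,b,c,d,f) 3 2 = c" by (simp add: ev5_def)
lemma ev5_14n: "ev5 (a,b,c,d,f) 1 4 = d" by (simp add: ev5_def)
lemma ev5_14s: "ev5 (a,b,c,d,f) (Suc 0) 4 = d" by (simp add: ev5_def)
lemma ev5_41n: "ev5 (a,b,c,d,f) 4 1 = d" by (simp add: ev5_def)
lemma ev5_41s: "ev5 (a,b,c,d,f) 4 (Suc 0) = d" by (simp add: ev5_def)
lemma ev5_24n: "ev5 (a,b,c,d,f) 2 4 = f" by (simp add: ev5_def)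
lemma ev5_42n: "ev5 (a,b,c,d,f) 4 2 = f" by (simp add: ev5_def)
lemma ev5_34n: "ev5 (a,b,c,d,f) 3 4 = 1 / (a * b * c * d * f)" by (simp add: ev5_def)
lemma ev5_43n: "ev5 (a,b,c,d,f) 4 3 = 1 / (a * b * c * d * f)" by (simp add: ev5_def)
lemmas ev5_simps[simp] = ev5_12n ev5_12s ev5_21n ev5_21s ev5_13n ev5_13s ev5_31n ev5_31s ev5_23n ev5_32n ev5_14n ev5_14s ev5_41n ev5_41s ev5_24n ev5_42n ev5_34n ev5_43n

lemma coords_of_fst: "\<sigma> \<in> EF \<Longrightarrow> fst (coords_of p) \<sigma> = (case \<sigma> of (i,j,k) \<Rightarrow> 1 / (ev5 p i j * ev5 p j k * ev5 p k i))"
  by (simp add: coords_of_def)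
lemma coords_of_snd: "\<sigma> \<in> EF \<Longrightarrow> snd (coords_of p) \<sigma> = (case \<sigma> of (i,j,k) \<Rightarrow> ev5 p i j)"
  by (simp add: coords_of_def)

lemma coords_of_in:
  assumes "p \<in> S5" shows "coords_of p \<in> Dplus_T"
proof -
  obtain a b c d f where p: "p = (a,b,c,d,f)" and pos: "a > 0" "b > 0" "c > 0" "d > 0" "f > 0"
    using assms unfolding S5_def by auto
  obtain t e where te: "coords_of p = (t, e)" by (cases "coords_of p")
  have tv: "\<And>\<sigma>. \<sigma> \<in> EF \<Longrightarrow> t \<sigma> = (case \<sigma> of (i,j,k) \<Rightarrow> 1 / (ev5 p i j * ev5 p j k * ev5 p k i))"
    using coords_of_fst[of _ p] te by simp
  have ev: "\<And>\<sigma>. \<sigma> \<in> EF \<Longrightarrow> e \<sigma> = (case \<sigma> of (i,j,k) \<Rightarrow> ev5 p i j)"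
    using coords_of_snd[of _ p] te by simp
  have ext: "t \<in> PiE EF (\<lambda>_. UNIV)" "e \<in> PiE EF (\<lambda>_. UNIV)"
    using te unfolding coords_of_def by auto
  have "t \<sigma> > 0 \<and> e \<sigma> > 0 \<and>
        t \<sigma> = t (sigma_plus \<sigma>) \<and> t \<sigma> = t (sigma_minus \<sigma>) \<and>
        e \<sigma> = e (sigma_bar \<sigma>) \<and>
        t \<sigma> * e \<sigma> * e (sigma_plus \<sigma>) * e (sigma_minus \<sigma>) = 1 \<and>
        t \<sigma> = e (sigma_op \<sigma>) * e (sigma_op (sigma_plus \<sigma>)) * e (sigma_op (sigma_minus \<sigma>))"
    if "\<sigma> \<in> EF" for \<sigma>
    using that unfolding EF_eq
    apply (elim insertE emptyE)
    using pos by (simp_all add: tv ev EF_eq p field_simps)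
  then show ?thesis unfolding te Dplus_T_def mem_Collect_eq case_prod_conv using ext by blast
qed

lemma edge_coords_coords_of: "edge_coords (coords_of p) = p"
  by (cases p) (simp add: edge_coords_def coords_of_def EF_eq ev5_def)

lemma Dplus_facts:
  assumes "(t, e) \<in> Dplus_T"
  shows "e (2,1,4) = e (1,2,3)" "e (3,1,2) = e (1,3,4)" "e (3,2,4) = e (2,3,1)"
    "e (4,1,3) = e (1,4,2)" "e (4,2,1) = e (2,4,3)" "e (4,3,2) = e (3,4,1)"
    "e (1,2,3) * e (1,3,4) * e (2,3,1) * e (1,4,2) * e (2,4,3) * e (3,4,1) = 1"
    "t (1,2,3) = 1 / (e (1,2,3) * e (2,3,1) * e (3,1,2))"
    "t (3,1,2) = 1 / (e (1,2,3) * e (2,3,1) * e (3,1,2))"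
    "t (2,3,1) = 1 / (e (1,2,3) * e (2,3,1) * e (3,1,2))"
    "t (1,3,4) = 1 / (e (1,3,4) * e (3,4,1) * e (4,1,3))"
    "t (4,1,3) = 1 / (e (1,3,4) * e (3,4,1) * e (4,1,3))"
    "t (3,4,1) = 1 / (e (1,3,4) * e (3,4,1) * e (4,1,3))"
    "t (1,4,2) = 1 / (e (1,4,2) * e (4,2,1) * e (2,1,4))"
    "t (2,1,4) = 1 / (e (1,4,2) * e (4,2,1) * e (2,1,4))"
    "t (4,2,1) = 1 / (e (1,4,2) * e (4,2,1) * e (2,1,4))"
    "t (2,4,3) = 1 / (e (2,4,3) * e (4,3,2) * e (3,2,4))"
    "t (3,2,4) = 1 / (e (2,4,3) * e (4,3,2) * e (3,2,4))"
    "t (4,3,2) = 1 / (e (2,4,3) * e (4,3,2) * e (3,2,4))"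
    "\<forall>\<sigma>\<in>EF. t \<sigma> > 0 \<and> e \<sigma> > 0"
proof -
  have H: "\<forall>\<sigma>\<in>EF. t \<sigma> > 0 \<and> e \<sigma> > 0 \<and>
        t \<sigma> = t (sigma_plus \<sigma>) \<and> t \<sigma> = t (sigma_minus \<sigma>) \<and>
        e \<sigma> = e (sigma_bar \<sigma>) \<and>
        t \<sigma> * e \<sigma> * e (sigma_plus \<sigma>) * e (sigma_minus \<sigma>) = 1 \<and>
        t \<sigma> = e (sigma_op \<sigma>) * e (sigma_op (sigma_plus \<sigma>)) * e (sigma_op (sigma_minus \<sigma>))"
    using assms unfolding Dplus_T_def by auto
  then show "\<forall>\<sigma>\<in>EF. t \<sigma> > 0 \<and> e \<sigma> > 0" by blast
  have H': "t \<sigma> > 0 \<and> e \<sigma> > 0 \<and>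
        t \<sigma> = t (sigma_plus \<sigma>) \<and> t \<sigma> = t (sigma_minus \<sigma>) \<and>
        e \<sigma> = e (sigma_bar \<sigma>) \<and>
        t \<sigma> * e \<sigma> * e (sigma_plus \<sigma>) * e (sigma_minus \<sigma>) = 1 \<and>
        t \<sigma> = e (sigma_op \<sigma>) * e (sigma_op (sigma_plus \<sigma>)) * e (sigma_op (sigma_minus \<sigma>))"
    if "\<sigma> \<in> EF" for \<sigma> using H that by blast
  have m1: "(1,2,3) \<in> EF" by (simp add: EF_eq)
  note h1 = H'[OF m1, unfolded sigma_simps fourth_simps]
  have m2: "(1,3,4) \<in> EF" by (simp add: EF_eq)
  note h2 = H'[OF m2, unfolded sigma_simps fourth_simps]
  have m3: "(2,3,1) \<in> EF" by (simp add: EF_eq)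
  note h3 = H'[OF m3, unfolded sigma_simps fourth_simps]
  have m4: "(1,4,2) \<in> EF" by (simp add: EF_eq)
  note h4 = H'[OF m4, unfolded sigma_simps fourth_simps]
  have m5: "(2,4,3) \<in> EF" by (simp add: EF_eq)
  note h5 = H'[OF m5, unfolded sigma_simps fourth_simps]
  have m6: "(3,4,1) \<in> EF" by (simp add: EF_eq)
  note h6 = H'[OF m6, unfolded sigma_simps fourth_simps]
  have m7: "(4,1,3) \<in> EF" by (simp add: EF_eq)
  note h7 = H'[OF m7, unfolded sigma_simps fourth_simps]
  have m8: "(2,1,4) \<in> EF" by (simp add: EF_eq)
  note h8 = H'[OF m8, unfolded sigma_simps fourth_simps]
  have m9: "(3,2,4) \<in> EF" by (simp add: EF_eq)
  note h9 = H'[OF m9, unfolded sigma_simps fourth_simps]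
  have inv3: "\<And>x a b c::real. x*a*b*c = 1 \<Longrightarrow> x = 1/(a*c*b)"
  proof -
    fix x a b c :: real assume h: "x*a*b*c = 1"
    then have "a*c*b \<noteq> 0" by auto
    then show "x = 1/(a*c*b)" using h by (simp add: field_simps)
  qed
  show b1: "e (2,1,4) = e (1,2,3)" "e (3,1,2) = e (1,3,4)" "e (3,2,4) = e (2,3,1)"
    "e (4,1,3) = e (1,4,2)" "e (4,2,1) = e (2,4,3)" "e (4,3,2) = e (3,4,1)"
    using h1 h2 h3 h4 h5 h6 by auto
  show "e (1,2,3) * e (1,3,4) * e (2,3,1) * e (1,4,2) * e (2,4,3) * e (3,4,1) = 1"
  proof -
    have "t (1,2,3) * e (1,2,3) * e (3,1,2) * e (2,3,1) = 1"
      "t (1,2,3) = e (4,3,2) * e (4,2,1) * e (4,1,3)" using h1 by auto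
    then show ?thesis using b1 by (simp add: algebra_simps)
  qed
  have "t (1,2,3) * e (1,2,3) * e (3,1,2) * e (2,3,1) = 1" "t (3,1,2) = t (1,2,3)" "t (2,3,1) = t (1,2,3)"
    using h1 by auto
  then show "t (1,2,3) = 1 / (e (1,2,3) * e (2,3,1) * e (3,1,2))"
    "t (3,1,2) = 1 / (e (1,2,3) * e (2,3,1) * e (3,1,2))"
    "t (2,3,1) = 1 / (e (1,2,3) * e (2,3,1) * e (3,1,2))"
    using inv3 by metis+
  have "t (1,3,4) * e (1,3,4) * e (4,1,3) * e (3,4,1) = 1" "t (4,1,3) = t (1,3,4)" "t (3,4,1) = t (1,3,4)"
    using h2 by auto
  then show "t (1,3,4) = 1 / (e (1,3,4) * e (3,4,1) * e (4,1,3))"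
    "t (4,1,3) = 1 / (e (1,3,4) * e (3,4,1) * e (4,1,3))"
    "t (3,4,1) = 1 / (e (1,3,4) * e (3,4,1) * e (4,1,3))"
    using inv3 by metis+
  have "t (1,4,2) * e (1,4,2) * e (2,1,4) * e (4,2,1) = 1" "t (2,1,4) = t (1,4,2)" "t (4,2,1) = t (1,4,2)"
    using h4 by auto
  then show "t (1,4,2) = 1 / (e (1,4,2) * e (4,2,1) * e (2,1,4))"
    "t (2,1,4) = 1 / (e (1,4,2) * e (4,2,1) * e (2,1,4))"
    "t (4,2,1) = 1 / (e (1,4,2) * e (4,2,1) * e (2,1,4))"
    using inv3 by metis+
  have "t (2,4,3) * e (2,4,3) * e (3,2,4) * e (4,3,2) = 1" "t (3,2,4) = t (2,4,3)" "t (4,3,2) = t (2,4,3)"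
    using h5 by auto
  then show "t (2,4,3) = 1 / (e (2,4,3) * e (4,3,2) * e (3,2,4))"
    "t (3,2,4) = 1 / (e (2,4,3) * e (4,3,2) * e (3,2,4))"
    "t (4,3,2) = 1 / (e (2,4,3) * e (4,3,2) * e (3,2,4))"
    using inv3 by metis+
qed

lemma restrict_eq_PiE:
  assumes "f \<in> PiE A (\<lambda>_. UNIV)" "\<And>x. x \<in> A \<Longrightarrow> g x = f x"
  shows "restrict g A = f"
proof
  fix x show "restrict g A x = f x"
  proof (cases "x \<in> A")
    case True then show ?thesis using assms(2)[OF True] by simp
  next
    case False then show ?thesis using PiE_arb[OF assms(1) False] by simp
  qed
qed

lemma coords_of_edge_coords:
  assumes "d \<in> Dplus_T" shows "coords_of (edge_coords d) = d"
proof -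
  obtain t e where d: "d = (t, e)" by (cases d)
  have tE: "t \<in> PiE EF (\<lambda>_. UNIV)" and eE: "e \<in> PiE EF (\<lambda>_. UNIV)"
    using assms unfolding d Dplus_T_def by auto
  note F = Dplus_facts[OF assms[unfolded d]]
  define a b c d' f g where "a = e (1,2,3)" "b = e (1,3,4)" "c = e (2,3,1)" "d' = e (1,4,2)"
     "f = e (2,4,3)" "g = e (3,4,1)"
  note defs = this
  have EC: "edge_coords (t, e) = (a,b,c,d',f)" by (simp add: edge_coords_def defs)
  have pos: "e \<sigma> > 0" if "\<sigma> \<in> EF" for \<sigma> using F(20) that by blast
  have p: "a > 0" "b > 0" "c > 0" "d' > 0" "f > 0"
    unfolding defs by (auto intro!: pos simp: EF_eq)
  have g: "g = 1 / (a * b * c * d' * f)"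
    using F(7) p unfolding defs by (simp add: field_simps)
  have ev: "e (1,2,3) = a" "e (1,3,4) = b" "e (1,4,2) = d'" "e (2,1,4) = a" "e (2,3,1) = c" "e (2,4,3) = f" "e (3,1,2) = b" "e (3,2,4) = c" "e (3,4,1) = g" "e (4,1,3) = d'" "e (4,2,1) = f" "e (4,3,2) = g"
    using F(1-6) unfolding defs by simp_all
  have tv: "t (1,2,3) = 1 / (a * c * b)" "t (1,3,4) = 1 / (b * g * d')" "t (1,4,2) = 1 / (d' * f * a)" "t (2,1,4) = 1 / (a * d' * f)" "t (2,3,1) = 1 / (c * b * a)" "t (2,4,3) = 1 / (f * g * c)" "t (3,1,2) = 1 / (b * a * c)" "t (3,2,4) = 1 / (c * f * g)" "t (3,4,1) = 1 / (g * d' * b)" "t (4,1,3) = 1 / (d' * b * g)" "t (4,2,1) = 1 / (f * a * d')" "t (4,3,2) = 1 / (g * c * f)"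
    using F(8-19)[unfolded defs[symmetric] ev] by (simp_all add: ac_simps)
  have HE0: "\<forall>\<sigma>\<in>EF. (case \<sigma> of (i, j, k) \<Rightarrow> ev5 (a,b,c,d',f) i j) = e \<sigma>"
    unfolding EF_eq ball_simps prod.case ev5_simps ev g[symmetric] by (intro conjI refl TrueI)
  have HE: "\<sigma> \<in> EF \<Longrightarrow> (case \<sigma> of (i, j, k) \<Rightarrow> ev5 (a,b,c,d',f) i j) = e \<sigma>" for \<sigma>
    using HE0 by blast
  have R1: "restrict (\<lambda>(i, j, k). ev5 (a,b,c,d',f) i j) EF = e"
    by (rule restrict_eq_PiE[OF eE HE])
  have HT: "\<sigma> \<in> EF \<Longrightarrow> (case \<sigma> of (i, j, k) \<Rightarrow> 1 / (ev5 (a,b,c,d',f) i j *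
        ev5 (a,b,c,d',f) j k * ev5 (a,b,c,d',f) k i)) = t \<sigma>" for \<sigma>
  proof -
    have "\<forall>\<sigma>\<in>EF. (case \<sigma> of (i, j, k) \<Rightarrow> 1 / (ev5 (a,b,c,d',f) i j *
        ev5 (a,b,c,d',f) j k * ev5 (a,b,c,d',f) k i)) = t \<sigma>"
      unfolding EF_eq ball_simps prod.case ev5_simps tv g[symmetric] by (intro conjI refl TrueI)
    then show "\<sigma> \<in> EF \<Longrightarrow> (case \<sigma> of (i, j, k) \<Rightarrow> 1 / (ev5 (a,b,c,d',f) i j *
        ev5 (a,b,c,d',f) j k * ev5 (a,b,c,d',f) k i)) = t \<sigma>" by blast
  qed
  have R2: "restrict (\<lambda>(i, j, k). 1 / (ev5 (a,b,c,d',f) i j *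
        ev5 (a,b,c,d',f) j k * ev5 (a,b,c,d',f) k i)) EF = t"
    by (rule restrict_eq_PiE[OF tE HT])
  show ?thesis unfolding d coords_of_def EC R1 R2 by (rule refl)
qed

lemma topspace_Dplus: "topspace Dplus_top = Dplus_T"
  unfolding Dplus_top_def by (auto simp: Dplus_T_def)

lemma proj_snd_cont: "\<sigma> \<in> EF \<Longrightarrow> continuous_map Dplus_top euclideanreal (\<lambda>d. snd d \<sigma>)"
proof -
  assume "\<sigma> \<in> EF"
  then have "continuous_map (prod_topology (product_topology (\<lambda>_. euclideanreal) EF)
                    (product_topology (\<lambda>_. euclideanreal) EF)) euclideanreal ((\<lambda>x. x \<sigma>) \<circ> snd)"
    by (intro continuous_map_compose[OF continuous_map_snd] continuous_map_product_projection)
  then show ?thesis unfolding Dplus_top_def o_def by (rule continuous_map_from_subtopology)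
qed

lemma edge_coords_cont: "continuous_map Dplus_top R5pos edge_coords"
proof -
  have m: "(1,2,3) \<in> EF" "(1,3,4) \<in> EF" "(2,3,1) \<in> EF" "(1,4,2) \<in> EF" "(2,4,3) \<in> EF"
    by (simp_all add: EF_eq)
  have "continuous_map Dplus_top (prod_topology euclideanreal (prod_topology euclideanreal
     (prod_topology euclideanreal (prod_topology euclideanreal euclideanreal)))) edge_coords"
    unfolding edge_coords_def Let_def
    by (intro continuous_map_pairedI proj_snd_cont m)
  then have c: "continuous_map Dplus_top euclidean edge_coords" by simp
  have "edge_coords \<in> topspace Dplus_top \<rightarrow> S5"
  proof
    fix x assume "x \<in> topspace Dplus_top"
    then have "x \<in> Dplus_T" by (simp add: topspace_Dplus)
    then have "\<forall>\<sigma>\<in>EF. snd x \<sigma> > 0" unfolding Dplus_T_def by auto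
    then show "edge_coords x \<in> S5" using m unfolding edge_coords_def S5_def Let_def by auto
  qed
  then show ?thesis unfolding R5pos_def continuous_map_in_subtopology using c S5_def by simp
qed

lemma ev5_alt: "(\<lambda>p. ev5 p i j) =
   (if (i = 1 \<and> j = 2) \<or> (i = 2 \<and> j = 1) then (\<lambda>p. fst p)
     else if (i = 1 \<and> j = 3) \<or> (i = 3 \<and> j = 1) then (\<lambda>p. fst (snd p))
     else if (i = 2 \<and> j = 3) \<or> (i = 3 \<and> j = 2) then (\<lambda>p. fst (snd (snd p)))
     else if (i = 1 \<and> j = 4) \<or> (i = 4 \<and> j = 1) then (\<lambda>p. fst (snd (snd (snd p))))
     else if (i = 2 \<and> j = 4) \<or> (i = 4 \<and> j = 2) then (\<lambda>p. snd (snd (snd (snd p))))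
     else (\<lambda>p. 1 / (fst p * fst (snd p) * fst (snd (snd p)) * fst (snd (snd (snd p))) * snd (snd (snd (snd p))))))"
  by (auto simp: fun_eq_iff ev5_def split: prod.split)

lemma ev5_pos: "p \<in> S5 \<Longrightarrow> ev5 p i j > 0"
  by (auto simp: ev5_def S5_def)

lemma ev5_cont: "continuous_on S5 (\<lambda>p. ev5 p i j)"
proof -
  have "continuous_on S5 (\<lambda>p. 1 / (fst p * fst (snd p) * fst (snd (snd p)) * fst (snd (snd (snd p))) * snd (snd (snd (snd p)))))"
    by (intro continuous_intros) (auto simp: S5_def)
  then show ?thesis unfolding ev5_alt by (simp add: continuous_intros)
qed

lemma coords_of_cont: "continuous_map R5pos Dplus_top coords_of"
proof -
  have top: "topspace R5pos = S5" by (rule topspace_R5pos)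
  have R: "R5pos = top_of_set S5" unfolding R5pos_def S5_def by simp
  have c1: "continuous_map R5pos (product_topology (\<lambda>_. euclideanreal) EF) (fst \<circ> coords_of)"
    unfolding continuous_map_componentwise
  proof
    show "(fst \<circ> coords_of) ` topspace R5pos \<subseteq> extensional EF"
      by (auto simp: coords_of_def)
    show "\<forall>k\<in>EF. continuous_map R5pos euclideanreal (\<lambda>x. (fst \<circ> coords_of) x k)"
    proof
      fix k assume k: "k \<in> EF"
      obtain i j l where kk: "k = (i,j,l)" by (cases k)
      have "continuous_on S5 (\<lambda>p. 1 / (ev5 p i j * ev5 p j l * ev5 p l i))"
        by (intro continuous_intros ev5_cont) (auto dest: ev5_pos[of _ i j] ev5_pos[of _ j l] ev5_pos[of _ l i])
      then show "continuous_map R5pos euclideanreal (\<lambda>x. (fst \<circ> coords_of) x k)"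
        unfolding R using k kk by (simp add: coords_of_def cong: continuous_on_cong)
    qed
  qed
  have c2: "continuous_map R5pos (product_topology (\<lambda>_. euclideanreal) EF) (snd \<circ> coords_of)"
    unfolding continuous_map_componentwise
  proof
    show "(snd \<circ> coords_of) ` topspace R5pos \<subseteq> extensional EF"
      by (auto simp: coords_of_def)
    show "\<forall>k\<in>EF. continuous_map R5pos euclideanreal (\<lambda>x. (snd \<circ> coords_of) x k)"
    proof
      fix k assume k: "k \<in> EF"
      obtain i j l where kk: "k = (i,j,l)" by (cases k)
      have "continuous_on S5 (\<lambda>p. ev5 p i j)" by (rule ev5_cont)
      then show "continuous_map R5pos euclideanreal (\<lambda>x. (snd \<circ> coords_of) x k)"
        unfolding R using k kk by (simp add: coords_of_def cong: continuous_on_cong)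
    qed
  qed
  have "continuous_map R5pos (prod_topology (product_topology (\<lambda>_. euclideanreal) EF)
                    (product_topology (\<lambda>_. euclideanreal) EF)) coords_of"
    unfolding continuous_map_pairwise using c1 c2 by simp
  moreover have "coords_of \<in> topspace R5pos \<rightarrow> Dplus_T"
    using coords_of_in top by auto
  ultimately show ?thesis unfolding Dplus_top_def continuous_map_in_subtopology by simp
qed

theorem part2: "homeomorphic_map Dplus_top R5pos edge_coords"
  unfolding homeomorphic_map_maps homeomorphic_maps_def
proof (intro exI conjI)
  show "continuous_map Dplus_top R5pos edge_coords" by (rule edge_coords_cont)
  show "continuous_map R5pos Dplus_top coords_of" by (rule coords_of_cont)
  show "\<forall>x\<in>topspace Dplus_top. coords_of (edge_coords x) = x"
    using coords_of_edge_coords by (simp add: topspace_Dplus)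
  show "\<forall>y\<in>topspace R5pos. edge_coords (coords_of y) = y"
    by (simp add: edge_coords_coords_of)
qed

lemma topspace_quotient_topology: "topspace (quotient_topology X f) = f ` topspace X"
proof
  show "topspace (quotient_topology X f) \<subseteq> f ` topspace X"
    using openin_topspace[of "quotient_topology X f", unfolded openin_quotient_topology] by (rule conjunct1)
  have eq: "{x \<in> topspace X. f x \<in> f ` topspace X} = topspace X" by auto
  have "openin (quotient_topology X f) (f ` topspace X)"
    unfolding openin_quotient_topology eq by simp
  then show "f ` topspace X \<subseteq> topspace (quotient_topology X f)"
    by (rule openin_subset)
qed

lemma continuous_map_quotient: "continuous_map X (quotient_topology X f) f"
  unfolding continuous_map_def topspace_quotient_topology openin_quotient_topology by auto

lemma continuous_map_from_quotient:
  assumes "continuous_map X Y (g \<circ> f)"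
  shows "continuous_map (quotient_topology X f) Y g"
  unfolding continuous_map_def topspace_quotient_topology
proof (intro conjI allI impI)
  show "g \<in> f ` topspace X \<rightarrow> topspace Y"
    using assms unfolding continuous_map_def by auto
  fix U assume U: "openin Y U"
  have eq: "{x \<in> topspace X. f x \<in> {x \<in> f ` topspace X. g x \<in> U}} = {x \<in> topspace X. (g \<circ> f) x \<in> U}"
    by auto
  show "openin (quotient_topology X f) {x \<in> f ` topspace X. g x \<in> U}"
    unfolding openin_quotient_topology eq using assms U unfolding continuous_map_def by auto
qed

lemma TetCfg_D:
  assumes "F \<in> TetCfg"
  shows "fst F \<in> PiE idx (\<lambda>_. UNIV)" "snd F \<in> PiE idx (\<lambda>_. UNIV)"
    "\<forall>i\<in>idx. fst F i \<noteq> 0 \<and> snd F i \<noteq> 0"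
    "\<forall>i\<in>idx. \<forall>j\<in>idx. (snd F i \<bullet> fst F j) = 0 \<longleftrightarrow> i = j"
    "independent (fst F ` idx)" "card (fst F ` idx) = 4"
    "\<exists>s. (\<forall>i\<in>idx. s i = 1 \<or> s i = -1) \<and>
          (\<forall>m\<in>idx. \<forall>w. (\<forall>i\<in>idx. w i > 0) \<longrightarrow>
              snd F m \<bullet> (\<Sum>i\<in>idx. (w i * s i) *\<^sub>R fst F i) \<noteq> 0)"
proof -
  have H: "fst F \<in> PiE idx (\<lambda>_. UNIV) \<and> snd F \<in> PiE idx (\<lambda>_. UNIV) \<and>
    (\<forall>i\<in>idx. fst F i \<noteq> 0 \<and> snd F i \<noteq> 0) \<and>
    (\<forall>i\<in>idx. \<forall>j\<in>idx. (snd F i \<bullet> fst F j) = 0 \<longleftrightarrow> i = j) \<and>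
    independent (fst F ` idx) \<and> card (fst F ` idx) = 4 \<and>
    (\<exists>s. (\<forall>i\<in>idx. s i = 1 \<or> s i = -1) \<and>
          (\<forall>m\<in>idx. \<forall>w. (\<forall>i\<in>idx. w i > 0) \<longrightarrow>
              snd F m \<bullet> (\<Sum>i\<in>idx. (w i * s i) *\<^sub>R fst F i) \<noteq> 0))"
    using assms unfolding TetCfg_def is_tetrahedron_of_flags_def Let_def mem_Collect_eq .
  show "fst F \<in> PiE idx (\<lambda>_. UNIV)" using H by (elim conjE) assumption
  show "snd F \<in> PiE idx (\<lambda>_. UNIV)" using H by (elim conjE) assumption
  show "\<forall>i\<in>idx. fst F i \<noteq> 0 \<and> snd F i \<noteq> 0" using H by (elim conjE) assumption
  show "\<forall>i\<in>idx. \<forall>j\<in>idx. (snd F i \<bullet> fst F j) = 0 \<longleftrightarrow> i = j" using H by (elim conjE) assumption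
  show "independent (fst F ` idx)" using H by (elim conjE) assumption
  show "card (fst F ` idx) = 4" using H by (elim conjE) assumption
  show "\<exists>s. (\<forall>i\<in>idx. s i = 1 \<or> s i = -1) \<and>
          (\<forall>m\<in>idx. \<forall>w. (\<forall>i\<in>idx. w i > 0) \<longrightarrow>
              snd F m \<bullet> (\<Sum>i\<in>idx. (w i * s i) *\<^sub>R fst F i) \<noteq> 0)" using H by (elim conjE) assumption
qed

lemma topspace_cfg_top: "topspace cfg_top = TetCfg"
proof -
  have "topspace cfg_top = (PiE idx (\<lambda>_. UNIV) \<times> PiE idx (\<lambda>_. UNIV)) \<inter> TetCfg"
    unfolding cfg_top_def by simp
  moreover have "TetCfg \<subseteq> PiE idx (\<lambda>_. UNIV) \<times> PiE idx (\<lambda>_. UNIV)"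
  proof
    fix F assume "F \<in> TetCfg"
    then show "F \<in> PiE idx (\<lambda>_. UNIV) \<times> PiE idx (\<lambda>_. UNIV)"
      using TetCfg_D(1,2)[of F] by (simp only: mem_Times_iff)
  qed
  ultimately show ?thesis by blast
qed

lemma topspace_FL_T: "topspace FL_T = cfg_class ` TetCfg"
  unfolding FL_T_def topspace_quotient_topology topspace_cfg_top ..

lemma matrix_inv_unique:
  fixes A B :: "real^'n^'n"
  assumes "A ** B = mat 1" "B ** A = mat 1"
  shows "matrix_inv A = B"
  unfolding matrix_inv_def
proof (rule some_equality)
  show "A ** B = mat 1 \<and> B ** A = mat 1" using assms by simp
  fix X assume "A ** X = mat 1 \<and> X ** A = mat 1"
  then have X: "X ** A = mat 1" by simp
  have "X = X ** (A ** B)" using assms(1) by simp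
  also have "\<dots> = (X ** A) ** B" by (rule matrix_mul_assoc)
  also have "\<dots> = B" using X by simp
  finally show "X = B" .
qed

lemma matrix_inv_props:
  fixes A :: "real^'n^'n"
  assumes "invertible A"
  shows "A ** matrix_inv A = mat 1" "matrix_inv A ** A = mat 1"
proof -
  obtain B where B: "A ** B = mat 1" "B ** A = mat 1" using assms unfolding invertible_def by blast
  show "A ** matrix_inv A = mat 1" "matrix_inv A ** A = mat 1"
    using matrix_inv_unique[OF B] B by simp_all
qed

lemma cfg_equiv_refl: "cfg_equiv F F"
  unfolding cfg_equiv_def
proof (intro exI conjI)
  show "invertible (mat 1 :: real^4^4)" unfolding invertible_def by (intro exI[of _ "mat 1"]) simp
  have mi: "matrix_inv (mat 1 :: real^4^4) = mat 1" by (rule matrix_inv_unique) simp_all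
  show "\<forall>i\<in>idx. (1::real) \<noteq> 0 \<and> (1::real) \<noteq> 0 \<and> fst F i = 1 *\<^sub>R (mat 1 *v fst F i) \<and>
     snd F i = 1 *\<^sub>R (snd F i v* matrix_inv (mat 1))"
    by (simp add: mi)
qed

lemma cfg_equiv_sym:
  assumes "cfg_equiv F G" shows "cfg_equiv G F"
proof -
  obtain A a b where A: "invertible A" and h: "\<forall>i\<in>idx. a i \<noteq> 0 \<and> b i \<noteq> 0 \<and>
            fst G i = a i *\<^sub>R (A *v fst F i) \<and>
            snd G i = b i *\<^sub>R (snd F i v* matrix_inv A)"
    using assms unfolding cfg_equiv_def by blast
  note P = matrix_inv_props[OF A]
  have inv': "invertible (matrix_inv A)" unfolding invertible_def using P by blast
  have mi: "matrix_inv (matrix_inv A) = A" by (rule matrix_inv_unique) (simp_all add: P)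
  have X: "\<forall>i\<in>idx. 1 / a i \<noteq> 0 \<and> 1 / b i \<noteq> 0 \<and>
      fst F i = (1 / a i) *\<^sub>R (matrix_inv A *v fst G i) \<and>
      snd F i = (1 / b i) *\<^sub>R (snd G i v* matrix_inv (matrix_inv A))"
  proof
    fix i assume i: "i \<in> idx"
    have hi: "a i \<noteq> 0" "b i \<noteq> 0" "fst G i = a i *\<^sub>R (A *v fst F i)"
      "snd G i = b i *\<^sub>R (snd F i v* matrix_inv A)" using h i by auto
    show "1 / a i \<noteq> 0 \<and> 1 / b i \<noteq> 0 \<and>
      fst F i = (1 / a i) *\<^sub>R (matrix_inv A *v fst G i) \<and>
      snd F i = (1 / b i) *\<^sub>R (snd G i v* matrix_inv (matrix_inv A))"
      using hi by (simp add: mi matrix_vector_mult_scaleR scaleR_vector_matrix_assoc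
          matrix_vector_mul_assoc vector_matrix_mul_assoc P)
  qed
  show ?thesis unfolding cfg_equiv_def
    apply (rule exI[where x="matrix_inv A"])
    apply (rule conjI[OF inv'])
    apply (rule exI[where x="\<lambda>i. 1 / a i"])
    apply (rule exI[where x="\<lambda>i. 1 / b i"])
    using X by simp
qed

lemma cfg_equiv_trans:
  assumes "cfg_equiv F G" "cfg_equiv G H" shows "cfg_equiv F H"
proof -
  obtain A a b where A: "invertible A" and h: "\<forall>i\<in>idx. a i \<noteq> 0 \<and> b i \<noteq> 0 \<and>
            fst G i = a i *\<^sub>R (A *v fst F i) \<and>
            snd G i = b i *\<^sub>R (snd F i v* matrix_inv A)"
    using assms(1) unfolding cfg_equiv_def by blast
  obtain B a' b' where B: "invertible B" and h': "\<forall>i\<in>idx. a' i \<noteq> 0 \<and> b' i \<noteq> 0 \<and>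
            fst H i = a' i *\<^sub>R (B *v fst G i) \<and>
            snd H i = b' i *\<^sub>R (snd G i v* matrix_inv B)"
    using assms(2) unfolding cfg_equiv_def by blast
  note PA = matrix_inv_props[OF A] and PB = matrix_inv_props[OF B]
  have mi: "matrix_inv (B ** A) = matrix_inv A ** matrix_inv B"
  proof (rule matrix_inv_unique)
    have "(B ** A) ** (matrix_inv A ** matrix_inv B) = B ** (A ** matrix_inv A) ** matrix_inv B"
      by (simp add: matrix_mul_assoc)
    then show "(B ** A) ** (matrix_inv A ** matrix_inv B) = mat 1" by (simp add: PA PB)
    have "(matrix_inv A ** matrix_inv B) ** (B ** A) = matrix_inv A ** (matrix_inv B ** B) ** A"
      by (simp add: matrix_mul_assoc)
    then show "(matrix_inv A ** matrix_inv B) ** (B ** A) = mat 1" by (simp add: PA PB)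
  qed
  have X: "\<forall>i\<in>idx. a' i * a i \<noteq> 0 \<and> b' i * b i \<noteq> 0 \<and>
      fst H i = (a' i * a i) *\<^sub>R ((B ** A) *v fst F i) \<and>
      snd H i = (b' i * b i) *\<^sub>R (snd F i v* matrix_inv (B ** A))"
  proof
    fix i assume i: "i \<in> idx"
    have hi: "a i \<noteq> 0" "b i \<noteq> 0" "fst G i = a i *\<^sub>R (A *v fst F i)"
      "snd G i = b i *\<^sub>R (snd F i v* matrix_inv A)" using h i by auto
    have hi': "a' i \<noteq> 0" "b' i \<noteq> 0" "fst H i = a' i *\<^sub>R (B *v fst G i)"
      "snd H i = b' i *\<^sub>R (snd G i v* matrix_inv B)" using h' i by auto
    show "a' i * a i \<noteq> 0 \<and> b' i * b i \<noteq> 0 \<and>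
      fst H i = (a' i * a i) *\<^sub>R ((B ** A) *v fst F i) \<and>
      snd H i = (b' i * b i) *\<^sub>R (snd F i v* matrix_inv (B ** A))"
      using hi hi' by (simp add: mi matrix_vector_mult_scaleR scaleR_vector_matrix_assoc
          matrix_vector_mul_assoc vector_matrix_mul_assoc)
  qed
  show ?thesis unfolding cfg_equiv_def
    apply (rule exI[where x="B ** A"])
    apply (rule conjI[OF invertible_mult[OF B A]])
    apply (rule exI[where x="\<lambda>i. a' i * a i"])
    apply (rule exI[where x="\<lambda>i. b' i * b i"])
    using X by simp
qed

lemma cfg_class_eq:
  assumes "cfg_equiv F G" shows "cfg_class F = cfg_class G"
proof -
  have 1: "cfg_equiv G H" if "cfg_equiv F H" for H
    using cfg_equiv_trans[OF cfg_equiv_sym[OF assms] that] .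
  have 2: "cfg_equiv F H" if "cfg_equiv G H" for H
    using cfg_equiv_trans[OF assms that] .
  show ?thesis unfolding cfg_class_def using 1 2 by blast
qed

definition mm :: "cfg \<Rightarrow> nat \<Rightarrow> nat \<Rightarrow> real" where
  "mm F i j = snd F i \<bullet> fst F j"

definition tr :: "(nat \<Rightarrow> nat \<Rightarrow> real) \<Rightarrow> nat \<times> nat \<times> nat \<Rightarrow> real" where
  "tr m \<sigma> = (case \<sigma> of (i, j, k) \<Rightarrow> (m i j * m j k * m k i) / (m i k * m j i * m k j))"

definition er :: "(nat \<Rightarrow> nat \<Rightarrow> real) \<Rightarrow> nat \<times> nat \<times> nat \<Rightarrow> real" where
  "er m \<sigma> = (case \<sigma> of (i, j, k) \<Rightarrow>
     (m i k * m j (fourth i j k)) / (m i (fourth i j k) * m j k))"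

lemma triple_ratio_tr: "triple_ratio F = tr (mm F)"
  by (auto simp: fun_eq_iff triple_ratio_def tr_def mm_def Let_def)

lemma edge_ratio_er: "edge_ratio F = er (mm F)"
  by (auto simp: fun_eq_iff edge_ratio_def er_def mm_def Let_def)

lemma EF_props:
  assumes "(i,j,k) \<in> EF"
  shows "i \<in> idx" "j \<in> idx" "k \<in> idx" "fourth i j k \<in> idx" "distinct [i,j,k,fourth i j k]"
proof -
  have "i \<in> idx \<and> j \<in> idx \<and> k \<in> idx \<and> fourth i j k \<in> idx \<and> distinct [i,j,k,fourth i j k]"
    using assms unfolding EF_eq by (elim insertE emptyE) (simp_all add: idx4)
  then show "i \<in> idx" "j \<in> idx" "k \<in> idx" "fourth i j k \<in> idx" "distinct [i,j,k,fourth i j k]" by simp_all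
qed

lemma mm_equiv:
  assumes "cfg_equiv F G"
  shows "\<exists>a b. (\<forall>i\<in>idx. a i \<noteq> 0 \<and> b i \<noteq> 0) \<and>
               (\<forall>i\<in>idx. \<forall>j\<in>idx. mm G i j = b i * a j * mm F i j)"
proof -
  obtain A a b where A: "invertible A" and h: "\<forall>i\<in>idx. a i \<noteq> 0 \<and> b i \<noteq> 0 \<and>
            fst G i = a i *\<^sub>R (A *v fst F i) \<and>
            snd G i = b i *\<^sub>R (snd F i v* matrix_inv A)"
    using assms unfolding cfg_equiv_def by blast
  note P = matrix_inv_props[OF A]
  have "mm G i j = b i * a j * mm F i j" if "i \<in> idx" "j \<in> idx" for i j
  proof -
    have "mm G i j = (b i *\<^sub>R (snd F i v* matrix_inv A)) \<bullet> (a j *\<^sub>R (A *v fst F j))"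
      unfolding mm_def using h that by simp
    also have "\<dots> = b i * a j * (snd F i \<bullet> (matrix_inv A *v (A *v fst F j)))"
      by (simp add: dot_lmul_matrix)
    also have "\<dots> = b i * a j * mm F i j"
      by (simp add: matrix_vector_mul_assoc P mm_def)
    finally show ?thesis .
  qed
  then show ?thesis using h by blast
qed

lemma tr_er_scale:
  assumes ab: "\<forall>i\<in>idx. a i \<noteq> 0 \<and> b i \<noteq> 0"
    and m: "\<forall>i\<in>idx. \<forall>j\<in>idx. m' i j = b i * a j * m i j"
    and s: "\<sigma> \<in> EF"
  shows "tr m' \<sigma> = tr m \<sigma>" "er m' \<sigma> = er m \<sigma>"
proof -
  obtain i j k where sk: "\<sigma> = (i,j,k)" by (cases \<sigma>)
  define l where "l = fourth i j k"
  have I: "i \<in> idx" "j \<in> idx" "k \<in> idx" "l \<in> idx" using EF_props[OF s[unfolded sk]] l_def by auto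
  have nz: "a i \<noteq> 0" "a j \<noteq> 0" "a k \<noteq> 0" "a l \<noteq> 0" "b i \<noteq> 0" "b j \<noteq> 0" "b k \<noteq> 0" "b l \<noteq> 0"
    using ab I by auto
  have mij: "m' x y = b x * a y * m x y" if "x \<in> idx" "y \<in> idx" for x y using m that by blast
  have C: "b i * a j * b j * a k * b k * a i \<noteq> 0" using nz by simp
  have n1: "m' i j * m' j k * m' k i = (b i * a j * b j * a k * b k * a i) * (m i j * m j k * m k i)"
    unfolding mij[OF I(1) I(2)] mij[OF I(2) I(3)] mij[OF I(3) I(1)] by (simp only: ac_simps)
  have d1: "m' i k * m' j i * m' k j = (b i * a j * b j * a k * b k * a i) * (m i k * m j i * m k j)"
    unfolding mij[OF I(1) I(3)] mij[OF I(2) I(1)] mij[OF I(3) I(2)] by (simp only: ac_simps)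
  show "tr m' \<sigma> = tr m \<sigma>" unfolding tr_def sk prod.case n1 d1
    by (rule mult_divide_mult_cancel_left[OF C])
  have C2: "b i * a k * b j * a l \<noteq> 0" using nz by simp
  have n2: "m' i k * m' j l = (b i * a k * b j * a l) * (m i k * m j l)"
    unfolding mij[OF I(1) I(3)] mij[OF I(2) I(4)] by (simp only: ac_simps)
  have d2: "m' i l * m' j k = (b i * a k * b j * a l) * (m i l * m j k)"
    unfolding mij[OF I(1) I(4)] mij[OF I(2) I(3)] by (simp only: ac_simps)
  show "er m' \<sigma> = er m \<sigma>" unfolding er_def sk prod.case l_def[symmetric] n2 d2
    by (rule mult_divide_mult_cancel_left[OF C2])
qed

lemma ratios_equiv:
  assumes "cfg_equiv F G" "\<sigma> \<in> EF"
  shows "triple_ratio G \<sigma> = triple_ratio F \<sigma>" "edge_ratio G \<sigma> = edge_ratio F \<sigma>"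
  using mm_equiv[OF assms(1)] tr_er_scale[OF _ _ assms(2)]
  unfolding triple_ratio_tr edge_ratio_er by blast+

definition ratios :: "cfg \<Rightarrow> coords" where
  "ratios F = (restrict (triple_ratio F) EF, restrict (edge_ratio F) EF)"

lemma Psi_class:
  assumes "F \<in> TetCfg" shows "Psi (cfg_class F) = ratios F"
proof -
  have "F \<in> cfg_class F" using assms cfg_equiv_refl unfolding cfg_class_def by blast
  then have G: "(SOME G. G \<in> cfg_class F) \<in> cfg_class F" by (rule someI)
  then have E: "cfg_equiv F (SOME G. G \<in> cfg_class F)" unfolding cfg_class_def by blast
  have "restrict (triple_ratio (SOME G. G \<in> cfg_class F)) EF = restrict (triple_ratio F) EF"
    by (rule restrict_ext) (rule ratios_equiv(1)[OF E])
  moreover have "restrict (edge_ratio (SOME G. G \<in> cfg_class F)) EF = restrict (edge_ratio F) EF"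
    by (rule restrict_ext) (rule ratios_equiv(2)[OF E])
  ultimately show ?thesis unfolding Psi_def ratios_def Let_def by simp
qed

lemma EF_fourth:
  assumes "(i,j,k) \<in> EF"
  shows "fourth j i (fourth i j k) = k" "fourth k i j = fourth i j k" "fourth j k i = fourth i j k"
    "fourth (fourth i j k) k j = i" "fourth (fourth i j k) j i = k" "fourth (fourth i j k) i k = j"
    "(j, i, fourth i j k) \<in> EF" "(k,i,j) \<in> EF" "(j,k,i) \<in> EF"
proof -
  have "fourth j i (fourth i j k) = k \<and> fourth k i j = fourth i j k \<and> fourth j k i = fourth i j k \<and>
    fourth (fourth i j k) k j = i \<and> fourth (fourth i j k) j i = k \<and> fourth (fourth i j k) i k = j \<and>
    (j, i, fourth i j k) \<in> EF \<and> (k,i,j) \<in> EF \<and> (j,k,i) \<in> EF"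
    using assms unfolding EF_eq by (elim insertE emptyE) (simp_all add: EF_eq)
  then show "fourth j i (fourth i j k) = k" "fourth k i j = fourth i j k" "fourth j k i = fourth i j k"
    "fourth (fourth i j k) k j = i" "fourth (fourth i j k) j i = k" "fourth (fourth i j k) i k = j"
    "(j, i, fourth i j k) \<in> EF" "(k,i,j) \<in> EF" "(j,k,i) \<in> EF" by simp_all
qed

lemma Dplus_rel_generic:
  assumes nz: "\<forall>x\<in>idx. \<forall>y\<in>idx. x \<noteq> y \<longrightarrow> m x y \<noteq> 0" and s: "\<sigma> \<in> EF"
  shows "tr m \<sigma> = tr m (sigma_plus \<sigma>)" "tr m \<sigma> = tr m (sigma_minus \<sigma>)"
    "er m \<sigma> = er m (sigma_bar \<sigma>)"
    "tr m \<sigma> * er m \<sigma> * er m (sigma_plus \<sigma>) * er m (sigma_minus \<sigma>) = 1"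
    "tr m \<sigma> = er m (sigma_op \<sigma>) * er m (sigma_op (sigma_plus \<sigma>)) * er m (sigma_op (sigma_minus \<sigma>))"
proof -
  obtain i j k where sk: "\<sigma> = (i,j,k)" by (cases \<sigma>)
  define l where "l = fourth i j k"
  have s': "(i,j,k) \<in> EF" using s sk by simp
  have I: "i \<in> idx" "j \<in> idx" "k \<in> idx" "l \<in> idx" "distinct [i,j,k,l]"
    using EF_props[OF s'] l_def by auto
  note F4 = EF_fourth[OF s', folded l_def]
  have n: "m i j \<noteq> 0" "m i k \<noteq> 0" "m i l \<noteq> 0" "m j i \<noteq> 0" "m j k \<noteq> 0" "m j l \<noteq> 0"
     "m k i \<noteq> 0" "m k j \<noteq> 0" "m k l \<noteq> 0" "m l i \<noteq> 0" "m l j \<noteq> 0" "m l k \<noteq> 0"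
    using nz I by auto
  show "tr m \<sigma> = tr m (sigma_plus \<sigma>)" "tr m \<sigma> = tr m (sigma_minus \<sigma>)"
    unfolding sk sigma_simps tr_def prod.case by (simp_all add: ac_simps)
  show "er m \<sigma> = er m (sigma_bar \<sigma>)"
    unfolding sk sigma_simps er_def prod.case l_def[symmetric] F4 by (simp add: ac_simps)
  show "tr m \<sigma> * er m \<sigma> * er m (sigma_plus \<sigma>) * er m (sigma_minus \<sigma>) = 1"
    unfolding sk sigma_simps er_def tr_def prod.case l_def[symmetric] F4 using n by (simp add: field_simps)
  show "tr m \<sigma> = er m (sigma_op \<sigma>) * er m (sigma_op (sigma_plus \<sigma>)) * er m (sigma_op (sigma_minus \<sigma>))"
    unfolding sk sigma_simps er_def tr_def prod.case l_def[symmetric] F4 using n by (simp add: field_simps)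
qed

lemma sum_sign:
  fixes a b c :: real
  assumes "a * c < 0" "a * b > 0"
  shows "(a + b) * c < 0"
proof (cases "c < 0")
  case True
  then have "a > 0" using assms(1) by (auto simp: mult_less_0_iff)
  then have "b > 0" using assms(2) by (auto simp: zero_less_mult_iff)
  show ?thesis using True \<open>a > 0\<close> \<open>b > 0\<close> by (intro mult_pos_neg) auto
next
  case False
  then have "c > 0" using assms(1) by (cases "c = 0") auto
  then have "a < 0" using assms(1) by (auto simp: mult_less_0_iff)
  then have "b < 0" using assms(2) by (auto simp: zero_less_mult_iff)
  show ?thesis using \<open>c > 0\<close> \<open>a < 0\<close> \<open>b < 0\<close> by (intro mult_neg_pos) auto
qed

lemma three_pos:
  fixes xj xk xl :: real
  assumes "xj * xk < 0" "xl \<noteq> 0"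
  shows "\<exists>wj wk wl. wj > 0 \<and> wk > 0 \<and> wl > 0 \<and> wj * xj + wk * xk + wl * xl = 0"
proof (cases "xj * xl > 0")
  case True
  then have h: "(xj + xl) * xk < 0" using assms by (intro sum_sign)
  have "- (xj + xl) / xk > 0" using h by (auto simp: mult_less_0_iff zero_less_divide_iff)
  moreover have "xk \<noteq> 0" using h by auto
  then have "1 * xj + (- (xj + xl) / xk) * xk + 1 * xl = 0" by (auto simp: field_simps)
  ultimately show ?thesis by (intro exI[of _ 1] exI[of _ "- (xj + xl) / xk"]) auto
next
  case False
  have "xj \<noteq> 0" using assms by auto
  then have "xj * xl < 0" using False assms by (auto simp: not_less order.order_iff_strict)
  then have "xk * xl > 0" using assms(1)
    by (auto simp: mult_less_0_iff zero_less_mult_iff)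
  then have h: "(xk + xl) * xj < 0" using assms(1) by (intro sum_sign) (auto simp: mult.commute)
  have "- (xk + xl) / xj > 0" using h by (auto simp: mult_less_0_iff zero_less_divide_iff)
  moreover have "(- (xk + xl) / xj) * xj + 1 * xk + 1 * xl = 0" using \<open>xj \<noteq> 0\<close> by (auto simp: field_simps)
  ultimately show ?thesis by (intro exI[of _ "- (xk + xl) / xj"] exI[of _ 1]) auto
qed

lemma idx_split:
  assumes "m \<in> idx" "j \<in> idx" "k \<in> idx" "distinct [m,j,k]"
  shows "\<exists>l. l \<in> idx \<and> distinct [m,j,k,l] \<and> idx = {m,j,k,l}"
proof -
  have "m = 1 \<or> m = 2 \<or> m = 3 \<or> m = 4" "j = 1 \<or> j = 2 \<or> j = 3 \<or> j = 4"
    "k = 1 \<or> k = 2 \<or> k = 3 \<or> k = 4" using assms(1-3) unfolding idx4 by blast+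
  then have "fourth m j k \<in> {1,2,3,4} \<and> distinct [m,j,k,fourth m j k] \<and> {1,2,3,4} = {m,j,k,fourth m j k}"
    using assms(4) by (elim disjE) (simp_all, auto)
  then show ?thesis unfolding idx4 by blast
qed

lemma sign_lemma:
  assumes F: "F \<in> TetCfg"
  obtains s where "\<forall>i\<in>idx. s i = 1 \<or> s i = -1"
    "\<And>m j k. m \<in> idx \<Longrightarrow> j \<in> idx \<Longrightarrow> k \<in> idx \<Longrightarrow> j \<noteq> m \<Longrightarrow> k \<noteq> m \<Longrightarrow>
        s j * s k * (mm F m j * mm F m k) > 0"
proof -
  obtain s where s1: "\<forall>i\<in>idx. s i = 1 \<or> s i = -1" and
    s2: "\<forall>m\<in>idx. \<forall>w. (\<forall>i\<in>idx. w i > 0) \<longrightarrow>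
              snd F m \<bullet> (\<Sum>i\<in>idx. (w i * s i) *\<^sub>R fst F i) \<noteq> 0"
    using TetCfg_D(7)[OF F] by blast
  have nd: "\<forall>i\<in>idx. \<forall>j\<in>idx. (mm F i j = 0) \<longleftrightarrow> i = j"
    using TetCfg_D(4)[OF F] unfolding mm_def .
  have ss: "s i * s i = 1" if "i \<in> idx" for i using s1 that by auto
  have "s j * s k * (mm F m j * mm F m k) > 0"
    if m: "m \<in> idx" "j \<in> idx" "k \<in> idx" "j \<noteq> m" "k \<noteq> m" for m j k
  proof (cases "j = k")
    case True
    have "mm F m j \<noteq> 0" using nd m by auto
    then have "0 < mm F m j * mm F m j" by (auto simp: zero_less_mult_iff linorder_neq_iff)
    then have "0 < s j * s j * (mm F m j * mm F m j)" using ss[OF m(2)] by simp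
    then show ?thesis using True by simp
  next
    case False
    obtain l where l: "l \<in> idx" "distinct [m,j,k,l]" "idx = {m,j,k,l}"
      using idx_split[of m j k] m False by auto
    have nz: "s j * mm F m j \<noteq> 0" "s k * mm F m k \<noteq> 0" "s l * mm F m l \<noteq> 0"
      using nd m l s1 by auto
    show ?thesis
    proof (rule ccontr)
      assume "\<not> ?thesis"
      then have "(s j * mm F m j) * (s k * mm F m k) < 0" using nz
        by (simp add: not_less mult_ac order.order_iff_strict no_zero_divisors)
      then obtain wj wk wl where w: "wj > 0" "wk > 0" "wl > 0"
        "wj * (s j * mm F m j) + wk * (s k * mm F m k) + wl * (s l * mm F m l) = 0"
        using three_pos nz(3) by blast
      define w where "w i = (if i = j then wj else if i = k then wk else if i = l then wl else 1)" for i
      have wpos: "\<forall>i\<in>idx. w i > 0" using w unfolding w_def by auto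
      have "snd F m \<bullet> (\<Sum>i\<in>idx. (w i * s i) *\<^sub>R fst F i) = (\<Sum>i\<in>idx. w i * s i * mm F m i)"
        by (simp add: inner_sum_right mm_def)
      also have "\<dots> = w m * s m * mm F m m + w j * s j * mm F m j + w k * s k * mm F m k + w l * s l * mm F m l"
        unfolding l(3) using l(2) by (simp add: add.assoc)
      also have "\<dots> = 0" using nd m w l(2) unfolding w_def by (simp add: algebra_simps)
      finally show False using s2 m(1) wpos by blast
    qed
  qed
  then show ?thesis using that s1 by blast
qed

lemma ratios_pos:
  assumes F: "F \<in> TetCfg" and s: "\<sigma> \<in> EF"
  shows "tr (mm F) \<sigma> > 0" "er (mm F) \<sigma> > 0"
proof -
  obtain sg where s1: "\<forall>i\<in>idx. sg i = 1 \<or> sg i = -1" and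
    s2: "\<And>m j k. m \<in> idx \<Longrightarrow> j \<in> idx \<Longrightarrow> k \<in> idx \<Longrightarrow> j \<noteq> m \<Longrightarrow> k \<noteq> m \<Longrightarrow>
        sg j * sg k * (mm F m j * mm F m k) > 0"
    using sign_lemma[OF F] by blast
  obtain i j k where sk: "\<sigma> = (i,j,k)" by (cases \<sigma>)
  define l where "l = fourth i j k"
  have s': "(i,j,k) \<in> EF" using s sk by simp
  have I: "i \<in> idx" "j \<in> idx" "k \<in> idx" "l \<in> idx" "distinct [i,j,k,l]"
    using EF_props[OF s'] l_def by auto
  have sv: "sg x = 1 \<or> sg x = -1" if "x \<in> idx" for x using s1 that by auto
  have sq: "(sg x * sg y)^2 = 1" if "x \<in> idx" "y \<in> idx" for x y
    using sv[OF that(1)] sv[OF that(2)] by (elim disjE) (simp_all add: power2_eq_square)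
  have sq3: "(sg i * sg j * sg k)^2 = 1"
    using sv[OF I(1)] sv[OF I(2)] sv[OF I(3)] by (elim disjE) (simp_all add: power2_eq_square)
  let ?m = "mm F"
  have p1: "sg j * sg k * (?m i j * ?m i k) > 0" "sg k * sg i * (?m j k * ?m j i) > 0"
    "sg i * sg j * (?m k i * ?m k j) > 0" using s2 I by auto
  have "(sg j * sg k * (?m i j * ?m i k)) * (sg k * sg i * (?m j k * ?m j i)) * (sg i * sg j * (?m k i * ?m k j)) > 0"
    using p1 by simp
  then have "(sg i * sg j * sg k)^2 * ((?m i j * ?m j k * ?m k i) * (?m i k * ?m j i * ?m k j)) > 0"
    by (simp add: power2_eq_square ac_simps)
  then have "(?m i j * ?m j k * ?m k i) * (?m i k * ?m j i * ?m k j) > 0" using sq3 by simp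
  then show "tr (mm F) \<sigma> > 0" unfolding sk tr_def prod.case
    by (simp add: zero_less_mult_iff zero_less_divide_iff)
  have p2: "sg k * sg l * (?m i k * ?m i l) > 0" "sg l * sg k * (?m j l * ?m j k) > 0"
    using s2 I by auto
  have "(sg k * sg l * (?m i k * ?m i l)) * (sg l * sg k * (?m j l * ?m j k)) > 0"
    using p2 by simp
  then have "(sg k * sg l)^2 * ((?m i k * ?m j l) * (?m i l * ?m j k)) > 0"
    by (simp add: power2_eq_square ac_simps)
  then have "(?m i k * ?m j l) * (?m i l * ?m j k) > 0" using sq[OF I(3) I(4)] by simp
  then show "er (mm F) \<sigma> > 0" unfolding sk er_def prod.case l_def[symmetric]
    by (simp add: zero_less_mult_iff zero_less_divide_iff)
qed

lemma mm_nz: "F \<in> TetCfg \<Longrightarrow> \<forall>x\<in>idx. \<forall>y\<in>idx. x \<noteq> y \<longrightarrow> mm F x y \<noteq> 0"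
  using TetCfg_D(4) unfolding mm_def by blast

lemma ratios_in_Dplus:
  assumes F: "F \<in> TetCfg" shows "ratios F \<in> Dplus_T"
proof -
  have R: "\<forall>\<sigma>\<in>EF. restrict (triple_ratio F) EF \<sigma> > 0 \<and> restrict (edge_ratio F) EF \<sigma> > 0 \<and>
        restrict (triple_ratio F) EF \<sigma> = restrict (triple_ratio F) EF (sigma_plus \<sigma>) \<and>
        restrict (triple_ratio F) EF \<sigma> = restrict (triple_ratio F) EF (sigma_minus \<sigma>) \<and>
        restrict (edge_ratio F) EF \<sigma> = restrict (edge_ratio F) EF (sigma_bar \<sigma>) \<and>
        restrict (triple_ratio F) EF \<sigma> * restrict (edge_ratio F) EF \<sigma> * restrict (edge_ratio F) EF (sigma_plus \<sigma>) *
          restrict (edge_ratio F) EF (sigma_minus \<sigma>) = 1 \<and>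
        restrict (triple_ratio F) EF \<sigma> = restrict (edge_ratio F) EF (sigma_op \<sigma>) *
          restrict (edge_ratio F) EF (sigma_op (sigma_plus \<sigma>)) * restrict (edge_ratio F) EF (sigma_op (sigma_minus \<sigma>))"
  proof
    fix \<sigma> assume s: "\<sigma> \<in> EF"
    obtain i j k where sk: "\<sigma> = (i,j,k)" by (cases \<sigma>)
    have s': "(i,j,k) \<in> EF" using s sk by simp
    note F4 = EF_fourth[OF s']
    have op: "sigma_op \<sigma> \<in> EF" "sigma_op (sigma_plus \<sigma>) \<in> EF" "sigma_op (sigma_minus \<sigma>) \<in> EF"
      "sigma_plus \<sigma> \<in> EF" "sigma_minus \<sigma> \<in> EF" "sigma_bar \<sigma> \<in> EF"
      using s' unfolding sk sigma_simps unfolding EF_eq by (elim insertE emptyE; simp)+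
    note G = Dplus_rel_generic[OF mm_nz[OF F] s]
    show "restrict (triple_ratio F) EF \<sigma> > 0 \<and> restrict (edge_ratio F) EF \<sigma> > 0 \<and>
        restrict (triple_ratio F) EF \<sigma> = restrict (triple_ratio F) EF (sigma_plus \<sigma>) \<and>
        restrict (triple_ratio F) EF \<sigma> = restrict (triple_ratio F) EF (sigma_minus \<sigma>) \<and>
        restrict (edge_ratio F) EF \<sigma> = restrict (edge_ratio F) EF (sigma_bar \<sigma>) \<and>
        restrict (triple_ratio F) EF \<sigma> * restrict (edge_ratio F) EF \<sigma> * restrict (edge_ratio F) EF (sigma_plus \<sigma>) *
          restrict (edge_ratio F) EF (sigma_minus \<sigma>) = 1 \<and>
        restrict (triple_ratio F) EF \<sigma> = restrict (edge_ratio F) EF (sigma_op \<sigma>) *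
          restrict (edge_ratio F) EF (sigma_op (sigma_plus \<sigma>)) * restrict (edge_ratio F) EF (sigma_op (sigma_minus \<sigma>))"
      unfolding restrict_apply'[OF s] restrict_apply'[OF op(1)] restrict_apply'[OF op(2)]
        restrict_apply'[OF op(3)] restrict_apply'[OF op(4)] restrict_apply'[OF op(5)] restrict_apply'[OF op(6)]
        triple_ratio_tr edge_ratio_er
      using G ratios_pos[OF F s] by blast
  qed
  have P: "restrict (triple_ratio F) EF \<in> PiE EF (\<lambda>_. UNIV)" "restrict (edge_ratio F) EF \<in> PiE EF (\<lambda>_. UNIV)"
    by simp_all
  show ?thesis unfolding ratios_def Dplus_T_def mem_Collect_eq case_prod_conv using R P by blast
qed

lemma fst_cont: "i \<in> idx \<Longrightarrow> continuous_map cfg_top euclidean (\<lambda>F. fst F i)"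
proof -
  assume i: "i \<in> idx"
  have "continuous_map (prod_topology (product_topology (\<lambda>_. euclidean) idx) (product_topology (\<lambda>_. euclidean) idx))
     euclidean ((\<lambda>x. x i) \<circ> fst)"
    by (intro continuous_map_compose[OF continuous_map_fst] continuous_map_product_projection i)
  then show ?thesis unfolding cfg_top_def o_def by (rule continuous_map_from_subtopology)
qed

lemma snd_cont: "i \<in> idx \<Longrightarrow> continuous_map cfg_top euclidean (\<lambda>F. snd F i)"
proof -
  assume i: "i \<in> idx"
  have "continuous_map (prod_topology (product_topology (\<lambda>_. euclidean) idx) (product_topology (\<lambda>_. euclidean) idx))
     euclidean ((\<lambda>x. x i) \<circ> snd)"
    by (intro continuous_map_compose[OF continuous_map_snd] continuous_map_product_projection i)
  then show ?thesis unfolding cfg_top_def o_def by (rule continuous_map_from_subtopology)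
qed

lemma mm_cont: "i \<in> idx \<Longrightarrow> j \<in> idx \<Longrightarrow> continuous_map cfg_top euclideanreal (\<lambda>F. mm F i j)"
proof -
  assume i: "i \<in> idx" and j: "j \<in> idx"
  have "continuous_map cfg_top (prod_topology euclidean euclidean) (\<lambda>F. (snd F i, fst F j))"
    by (intro continuous_map_pairedI snd_cont fst_cont i j)
  then have c1: "continuous_map cfg_top euclidean (\<lambda>F. (snd F i, fst F j))" by simp
  have c2: "continuous_map euclidean euclideanreal (\<lambda>p::(real^4) \<times> (real^4). fst p \<bullet> snd p)"
    by (simp add: continuous_intros)
  have "continuous_map cfg_top euclideanreal ((\<lambda>p::(real^4) \<times> (real^4). fst p \<bullet> snd p) \<circ> (\<lambda>F. (snd F i, fst F j)))"
    by (rule continuous_map_compose[OF c1 c2])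
  then show ?thesis unfolding mm_def o_def by simp
qed

lemma ratios_cont: "continuous_map cfg_top Dplus_top ratios"
proof -
  have nz: "mm F x y \<noteq> 0" if "F \<in> topspace cfg_top" "x \<in> idx" "y \<in> idx" "x \<noteq> y" for F x y
    using mm_nz[of F] that by (simp add: topspace_cfg_top)
  have c1: "continuous_map cfg_top (product_topology (\<lambda>_. euclideanreal) EF) (fst \<circ> ratios)"
    unfolding continuous_map_componentwise
  proof
    show "(fst \<circ> ratios) ` topspace cfg_top \<subseteq> extensional EF" by (auto simp: ratios_def)
    show "\<forall>k\<in>EF. continuous_map cfg_top euclideanreal (\<lambda>x. (fst \<circ> ratios) x k)"
    proof
      fix k assume k: "k \<in> EF"
      obtain i j l where kk: "k = (i,j,l)" by (cases k)
      have I: "i \<in> idx" "j \<in> idx" "l \<in> idx" "distinct [i,j,l]" using EF_props[OF k[unfolded kk]] by auto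
      have "continuous_map cfg_top euclideanreal (\<lambda>F. (mm F i j * mm F j l * mm F l i) / (mm F i l * mm F j i * mm F l j))"
        using I by (intro continuous_intros mm_cont) (auto dest: nz)
      then show "continuous_map cfg_top euclideanreal (\<lambda>x. (fst \<circ> ratios) x k)"
        using k unfolding kk by (simp add: ratios_def triple_ratio_tr tr_def)
    qed
  qed
  have c2: "continuous_map cfg_top (product_topology (\<lambda>_. euclideanreal) EF) (snd \<circ> ratios)"
    unfolding continuous_map_componentwise
  proof
    show "(snd \<circ> ratios) ` topspace cfg_top \<subseteq> extensional EF" by (auto simp: ratios_def)
    show "\<forall>k\<in>EF. continuous_map cfg_top euclideanreal (\<lambda>x. (snd \<circ> ratios) x k)"
    proof
      fix k assume k: "k \<in> EF"
      obtain i j l where kk: "k = (i,j,l)" by (cases k)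
      have I: "i \<in> idx" "j \<in> idx" "l \<in> idx" "fourth i j l \<in> idx" "distinct [i,j,l,fourth i j l]"
        using EF_props[OF k[unfolded kk]] by auto
      have "continuous_map cfg_top euclideanreal (\<lambda>F. (mm F i l * mm F j (fourth i j l)) / (mm F i (fourth i j l) * mm F j l))"
        using I by (intro continuous_intros mm_cont) (auto dest: nz)
      then show "continuous_map cfg_top euclideanreal (\<lambda>x. (snd \<circ> ratios) x k)"
        using k unfolding kk by (simp add: ratios_def edge_ratio_er er_def)
    qed
  qed
  have "continuous_map cfg_top (prod_topology (product_topology (\<lambda>_. euclideanreal) EF)
                    (product_topology (\<lambda>_. euclideanreal) EF)) ratios"
    unfolding continuous_map_pairwise using c1 c2 by simp
  moreover have "ratios \<in> topspace cfg_top \<rightarrow> Dplus_T"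
    using ratios_in_Dplus by (auto simp: topspace_cfg_top)
  ultimately show ?thesis unfolding Dplus_top_def continuous_map_in_subtopology by simp
qed

lemma Psi_cont: "continuous_map FL_T Dplus_top Psi"
  unfolding FL_T_def
proof (rule continuous_map_from_quotient)
  show "continuous_map cfg_top Dplus_top (Psi \<circ> cfg_class)"
    using ratios_cont by (rule continuous_map_eq) (simp add: topspace_cfg_top Psi_class)
qed

definition bv :: "nat \<Rightarrow> real^4" where
  "bv n = (if n = 1 then axis 1 1 else if n = 2 then axis 2 1 else if n = 3 then axis 3 1 else axis 4 1)"

lemma bv_simps: "bv 1 = axis 1 1" "bv 2 = axis 2 1" "bv 3 = axis 3 1" "bv 4 = axis 4 1" "bv (Suc 0) = axis 1 1"
  by (simp_all add: bv_def)

lemma inner_bv: "x \<bullet> bv 1 = x $ 1" "x \<bullet> bv 2 = x $ 2" "x \<bullet> bv 3 = x $ 3" "x \<bullet> bv 4 = x $ 4" "x \<bullet> bv (Suc 0) = x $ 1"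
  by (simp_all add: bv_simps inner_axis)

lemma vec_eq_bv:
  fixes x y :: "real^4"
  assumes "\<forall>j\<in>idx. x \<bullet> bv j = y \<bullet> bv j"
  shows "x = y"
proof -
  have "x \<bullet> bv 1 = y \<bullet> bv 1" "x \<bullet> bv 2 = y \<bullet> bv 2" "x \<bullet> bv 3 = y \<bullet> bv 3" "x \<bullet> bv 4 = y \<bullet> bv 4"
    using assms by (auto simp: idx4)
  then have "x $ 1 = y $ 1" "x $ 2 = y $ 2" "x $ 3 = y $ 3" "x $ 4 = y $ 4" by (simp_all add: inner_bv)
  then show ?thesis unfolding vec_eq_iff forall_4 by simp
qed

lemma bv_inner_bv:
  assumes "i \<in> idx" "j \<in> idx" shows "bv i \<bullet> bv j = (if i = j then 1 else 0)"
proof -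
  have "i = 1 \<or> i = 2 \<or> i = 3 \<or> i = 4" "j = 1 \<or> j = 2 \<or> j = 3 \<or> j = 4"
    using assms unfolding idx4 by blast+
  then show ?thesis by (elim disjE) (simp_all add: bv_simps inner_axis_axis)
qed

lemma bv_Basis: "bv i \<in> Basis"
  by (simp add: bv_def axis_in_Basis_iff)

lemma bv_nz: "bv i \<noteq> 0"
  by (simp add: bv_def axis_eq_0_iff)

lemma Basis_bv: "x \<in> (Basis :: (real^4) set) \<Longrightarrow> \<exists>j\<in>idx. x = bv j"
proof -
  assume "x \<in> Basis"
  then obtain k :: 4 where k: "x = axis k 1" unfolding Basis_vec_def by auto
  have "k = 1 \<or> k = 2 \<or> k = 3 \<or> k = 4" by (rule exhaust_4)
  then show ?thesis using k unfolding idx4 by (auto simp: bv_simps)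
qed

lemma bv_inj: "inj_on bv idx"
  unfolding inj_on_def idx4 by (auto simp: bv_simps axis_eq_axis)

lemma card_bv: "card (bv ` idx) = 4"
  using card_image[OF bv_inj] by (simp add: idx4)

definition Nf :: "nat \<Rightarrow> nat \<Rightarrow> real \<times> real \<times> real \<times> real \<times> real \<Rightarrow> real" where
  "Nf i j = (if i = j then (\<lambda>p. 0) else if i = 1 \<or> j = 1 \<or> (i = 2 \<and> j = 3) then (\<lambda>p. 1)
     else if i = 2 \<and> j = 4 then (\<lambda>p. ev5 p 1 2)
     else if i = 3 \<and> j = 4 then (\<lambda>p. ev5 p 2 3 * ev5 p 1 2)
     else if i = 3 \<and> j = 2 then (\<lambda>p. ev5 p 1 3 * ev5 p 2 3 * ev5 p 1 2)
     else if i = 4 \<and> j = 3 then (\<lambda>p. 1 / ev5 p 2 4)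
     else (\<lambda>p. 1 / (ev5 p 1 4 * ev5 p 2 4)))"

lemma Nf_pos: "p \<in> S5 \<Longrightarrow> i \<noteq> j \<Longrightarrow> Nf i j p > 0"
  using ev5_pos[of p] unfolding Nf_def by auto

lemma Nf_diag: "Nf i i p = 0"
  by (simp add: Nf_def)

lemma Nf_cont: "continuous_on S5 (Nf i j)"
proof -
  have c: "continuous_on S5 (\<lambda>p. ev5 p x y)" for x y by (rule ev5_cont)
  have nz: "\<And>p. p \<in> S5 \<Longrightarrow> ev5 p x y \<noteq> 0" for x y using ev5_pos by (metis less_irrefl)
  show ?thesis unfolding Nf_def
    by (simp add: continuous_on_const; intro conjI impI continuous_intros c; simp add: nz)
qed

definition eta :: "real \<times> real \<times> real \<times> real \<times> real \<Rightarrow> nat \<Rightarrow> real^4" where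
  "eta p i = Nf i 1 p *\<^sub>R bv 1 + Nf i 2 p *\<^sub>R bv 2 + Nf i 3 p *\<^sub>R bv 3 + Nf i 4 p *\<^sub>R bv 4"

lemma eta_bv: "j \<in> idx \<Longrightarrow> eta p i \<bullet> bv j = Nf i j p"
proof -
  assume "j \<in> idx"
  then have "j = 1 \<or> j = 2 \<or> j = 3 \<or> j = 4" unfolding idx4 by blast
  then show ?thesis unfolding eta_def
    by (elim disjE) (simp_all add: inner_add_left bv_inner_bv idx4)
qed

definition Sec :: "real \<times> real \<times> real \<times> real \<times> real \<Rightarrow> cfg" where
  "Sec p = (restrict bv idx, restrict (eta p) idx)"

lemma mm_Sec: "i \<in> idx \<Longrightarrow> j \<in> idx \<Longrightarrow> mm (Sec p) i j = Nf i j p"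
  by (simp add: mm_def Sec_def eta_bv)

lemma Sec_Tet:
  assumes p: "p \<in> S5" shows "Sec p \<in> TetCfg"
proof -
  have img: "restrict bv idx ` idx = bv ` idx" by auto
  have eta_nz: "eta p i \<noteq> 0" if "i \<in> idx" for i
  proof
    assume "eta p i = 0"
    define j where "j = (if i = 1 then 2 else 1::nat)"
    have j: "j \<in> idx" "i \<noteq> j" unfolding j_def idx4 by auto
    have "eta p i \<bullet> bv j = 0" using \<open>eta p i = 0\<close> by simp
    then show False using eta_bv[OF j(1)] Nf_pos[OF p j(2)] by simp
  qed
  have ND: "\<forall>i\<in>idx. \<forall>j\<in>idx. (restrict (eta p) idx i \<bullet> restrict bv idx j = 0) \<longleftrightarrow> i = j"
    using eta_bv Nf_pos[OF p] Nf_diag by (metis less_irrefl restrict_apply')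
  have IND: "independent (restrict bv idx ` idx)"
    unfolding img by (rule independent_mono[OF independent_Basis]) (auto simp: bv_Basis)
  have CARD: "card (restrict bv idx ` idx) = 4" unfolding img by (rule card_bv)
  have TET: "\<forall>m\<in>idx. \<forall>w. (\<forall>i\<in>idx. w i > 0) \<longrightarrow>
              restrict (eta p) idx m \<bullet> (\<Sum>i\<in>idx. (w i * 1) *\<^sub>R restrict bv idx i) \<noteq> 0"
  proof (intro ballI allI impI)
    fix m w assume m: "m \<in> idx" and w: "\<forall>i\<in>idx. (0::real) < w i"
    have "restrict (eta p) idx m \<bullet> (\<Sum>i\<in>idx. (w i * 1) *\<^sub>R restrict bv idx i) = (\<Sum>i\<in>idx. w i * Nf m i p)"
      using m by (simp add: inner_sum_right eta_bv)
    also have "\<dots> > 0"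
    proof (rule sum_pos2)
      show "finite idx" by (simp add: idx4)
      define j where "j = (if m = 1 then 2 else 1::nat)"
      show "j \<in> idx" unfolding j_def idx4 by auto
      have "m \<noteq> j" unfolding j_def by auto
      then show "0 < w j * Nf m j p" using w \<open>j \<in> idx\<close> Nf_pos[OF p] by simp
      fix i assume "i \<in> idx" then show "0 \<le> w i * Nf m i p"
        using w Nf_pos[OF p, of m i] Nf_diag[of m p] by (cases "m = i") auto
    qed
    finally show "restrict (eta p) idx m \<bullet> (\<Sum>i\<in>idx. (w i * 1) *\<^sub>R restrict bv idx i) \<noteq> 0" by simp
  qed
  have NZ: "\<forall>i\<in>idx. restrict bv idx i \<noteq> 0 \<and> restrict (eta p) idx i \<noteq> 0"
    using eta_nz bv_nz by simp
  have "is_tetrahedron_of_flags (Sec p)"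
    unfolding is_tetrahedron_of_flags_def Let_def Sec_def fst_conv snd_conv
    apply (intro conjI)
    apply simp
    apply simp
    apply (rule NZ)
    apply (rule ND)
    apply (rule IND)
    apply (rule CARD)
    apply (rule exI[of _ "\<lambda>_. 1"])
    using TET by simp
  then show ?thesis unfolding TetCfg_def by simp
qed

lemma tr_er_cong:
  assumes "\<forall>i\<in>idx. \<forall>j\<in>idx. m i j = m' i j" "\<sigma> \<in> EF"
  shows "tr m \<sigma> = tr m' \<sigma>" "er m \<sigma> = er m' \<sigma>"
proof -
  obtain i j k where sk: "\<sigma> = (i,j,k)" by (cases \<sigma>)
  have I: "i \<in> idx" "j \<in> idx" "k \<in> idx" "fourth i j k \<in> idx" using EF_props assms(2) sk by auto
  show "tr m \<sigma> = tr m' \<sigma>" "er m \<sigma> = er m' \<sigma>" unfolding sk tr_def er_def prod.case using assms(1) I by simp_all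
qed

lemma ratios_Sec:
  assumes p: "p \<in> S5" shows "ratios (Sec p) = coords_of p"
proof -
  obtain a b c d f where pp: "p = (a,b,c,d,f)" and pos: "a > 0" "b > 0" "c > 0" "d > 0" "f > 0"
    using p unfolding S5_def by auto
  have M: "\<forall>i\<in>idx. \<forall>j\<in>idx. mm (Sec p) i j = Nf i j p" using mm_Sec by blast
  have T: "\<forall>\<sigma>\<in>EF. tr (\<lambda>i j. Nf i j p) \<sigma> = (case \<sigma> of (i, j, k) \<Rightarrow> 1 / (ev5 p i j * ev5 p j k * ev5 p k i))"
    unfolding EF_eq pp using pos by (simp add: tr_def Nf_def field_simps)
  have E: "\<forall>\<sigma>\<in>EF. er (\<lambda>i j. Nf i j p) \<sigma> = (case \<sigma> of (i, j, k) \<Rightarrow> ev5 p i j)"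
    unfolding EF_eq pp using pos by (simp add: er_def Nf_def field_simps)
  have "restrict (triple_ratio (Sec p)) EF = restrict (\<lambda>(i, j, k). 1 / (ev5 p i j * ev5 p j k * ev5 p k i)) EF"
  proof (rule restrict_ext)
    fix \<sigma> assume s: "\<sigma> \<in> EF"
    show "triple_ratio (Sec p) \<sigma> = (case \<sigma> of (i, j, k) \<Rightarrow> 1 / (ev5 p i j * ev5 p j k * ev5 p k i))"
      unfolding triple_ratio_tr tr_er_cong(1)[OF M s] using T s by blast
  qed
  moreover have "restrict (edge_ratio (Sec p)) EF = restrict (\<lambda>(i, j, k). ev5 p i j) EF"
  proof (rule restrict_ext)
    fix \<sigma> assume s: "\<sigma> \<in> EF"
    show "edge_ratio (Sec p) \<sigma> = (case \<sigma> of (i, j, k) \<Rightarrow> ev5 p i j)"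
      unfolding edge_ratio_er tr_er_cong(2)[OF M s] using E s by blast
  qed
  ultimately show ?thesis unfolding ratios_def coords_of_def by simp
qed

lemma Sec_cont: "continuous_map R5pos cfg_top Sec"
proof -
  have R: "R5pos = top_of_set S5" unfolding R5pos_def S5_def by simp
  have c1: "continuous_map R5pos (product_topology (\<lambda>_. euclidean) idx) (fst \<circ> Sec)"
  proof -
    have "(fst \<circ> Sec) = (\<lambda>_. restrict bv idx)" by (auto simp: Sec_def)
    moreover have "restrict bv idx \<in> topspace (product_topology (\<lambda>_. euclidean) idx)" by simp
    ultimately show ?thesis by simp
  qed
  have c2: "continuous_map R5pos (product_topology (\<lambda>_. euclidean) idx) (snd \<circ> Sec)"
    unfolding continuous_map_componentwise
  proof
    show "(snd \<circ> Sec) ` topspace R5pos \<subseteq> extensional idx" by (auto simp: Sec_def)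
    show "\<forall>k\<in>idx. continuous_map R5pos euclidean (\<lambda>x. (snd \<circ> Sec) x k)"
    proof
      fix k assume k: "k \<in> idx"
      have "continuous_on S5 (\<lambda>p. eta p k)" unfolding eta_def
        by (intro continuous_intros Nf_cont)
      then show "continuous_map R5pos euclidean (\<lambda>x. (snd \<circ> Sec) x k)"
        unfolding R using k by (simp add: Sec_def)
    qed
  qed
  have "continuous_map R5pos (prod_topology (product_topology (\<lambda>_. euclidean) idx)
                    (product_topology (\<lambda>_. euclidean) idx)) Sec"
    unfolding continuous_map_pairwise using c1 c2 by simp
  moreover have "Sec \<in> topspace R5pos \<rightarrow> TetCfg"
    using Sec_Tet by (auto simp: topspace_R5pos)
  ultimately show ?thesis unfolding cfg_top_def continuous_map_in_subtopology by simp
qed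

lemma exists_matrix:
  fixes V W :: "nat \<Rightarrow> real^4"
  assumes ind: "independent (V ` idx)" and inj: "inj_on V idx" and sp: "span (W ` idx) = UNIV"
  shows "\<exists>A. invertible A \<and> (\<forall>j\<in>idx. A *v V j = W j)"
proof -
  obtain g where g: "linear g" "\<forall>x\<in>V ` idx. g x = (W \<circ> inv_into idx V) x"
      "range g = span ((W \<circ> inv_into idx V) ` (V ` idx))"
    using real_vector.linear_independent_extend_subspace[OF ind] by blast
  have gV: "g (V j) = W j" if "j \<in> idx" for j using g(2) that inv_into_f_f[OF inj that] by auto
  have "(W \<circ> inv_into idx V) ` (V ` idx) = W ` idx"
    using inv_into_f_f[OF inj] by (auto simp: image_iff)
  then have "range g = UNIV" using g(3) sp by simp
  then have surj: "surj g" by simp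
  obtain g' where g': "linear g'" "\<forall>x. g' (g x) = x" "\<forall>x. g (g' x) = x"
    using eucl.linear_surjective_isomorphism[OF g(1) surj] by blast
  have "invertible (matrix g)"
    unfolding matrix_invertible[OF g(1)] using g' by (auto simp: fun_eq_iff intro!: exI[of _ g'])
  moreover have "\<forall>j\<in>idx. matrix g *v V j = W j"
    using matrix_vector_mul(2)[OF g(1)] gV by simp
  ultimately show ?thesis by blast
qed

lemma ratios_snd: "\<sigma> \<in> EF \<Longrightarrow> snd (ratios F) \<sigma> = er (mm F) \<sigma>"
  by (simp add: ratios_def edge_ratio_er)

lemma Tet_equiv_Sec:
  assumes F: "F \<in> TetCfg"
  shows "cfg_equiv F (Sec (edge_coords (ratios F)))"
proof -
  define m where "m = mm F"
  define p where "p = edge_coords (ratios F)"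
  have pv: "p = (er m (1,2,3), er m (1,3,4), er m (2,3,1), er m (1,4,2), er m (2,4,3))"
    unfolding p_def edge_coords_def Let_def m_def by (simp add: ratios_snd EF_eq)
  have nz: "\<forall>x\<in>idx. \<forall>y\<in>idx. x \<noteq> y \<longrightarrow> m x y \<noteq> 0" using mm_nz[OF F] unfolding m_def .
  have diag: "m x x = 0" if "x \<in> idx" for x using TetCfg_D(4)[OF F] that unfolding m_def mm_def by blast
  have n: "m 1 2 \<noteq> 0" "m 1 3 \<noteq> 0" "m 1 4 \<noteq> 0" "m 2 1 \<noteq> 0" "m 2 3 \<noteq> 0" "m 2 4 \<noteq> 0"
     "m 3 1 \<noteq> 0" "m 3 2 \<noteq> 0" "m 3 4 \<noteq> 0" "m 4 1 \<noteq> 0" "m 4 2 \<noteq> 0" "m 4 3 \<noteq> 0"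
    using nz by (auto simp: idx4)
  define \<nu> where "\<nu> = m 2 3 / (m 2 1 * m 1 3)"
  define \<gamma> where "\<gamma> j = (if j = 1 then \<nu> else 1 / m 1 j)" for j
  define \<beta> where "\<beta> i = (if i = 1 then 1 else 1 / (\<nu> * m i 1))" for i
  have nu: "\<nu> \<noteq> 0" using n unfolding \<nu>_def by simp
  have gnz: "\<gamma> j \<noteq> 0" if "j \<in> idx" for j using that n nu unfolding \<gamma>_def idx4 by auto
  have bnz: "\<beta> i \<noteq> 0" if "i \<in> idx" for i using that n nu unfolding \<beta>_def idx4 by auto
  have E: "er m (1,2,3) = m 1 3 * m 2 4 / (m 1 4 * m 2 3)" "er m (1,3,4) = m 1 4 * m 3 2 / (m 1 2 * m 3 4)"
    "er m (2,3,1) = m 2 1 * m 3 4 / (m 2 4 * m 3 1)" "er m (1,4,2) = m 1 2 * m 4 3 / (m 1 3 * m 4 2)"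
    "er m (2,4,3) = m 2 3 * m 4 1 / (m 2 1 * m 4 3)"
    by (simp_all add: er_def)
  have d4: "m 1 1 = 0" "m 2 2 = 0" "m 3 3 = 0" "m 4 4 = 0" using diag by (simp_all add: idx4)
  have NFc: "Nf 1 1 p = \<beta> 1 * \<gamma> 1 * m 1 1" "Nf 1 2 p = \<beta> 1 * \<gamma> 2 * m 1 2" "Nf 1 3 p = \<beta> 1 * \<gamma> 3 * m 1 3" "Nf 1 4 p = \<beta> 1 * \<gamma> 4 * m 1 4" "Nf 2 1 p = \<beta> 2 * \<gamma> 1 * m 2 1" "Nf 2 2 p = \<beta> 2 * \<gamma> 2 * m 2 2" "Nf 2 3 p = \<beta> 2 * \<gamma> 3 * m 2 3" "Nf 2 4 p = \<beta> 2 * \<gamma> 4 * m 2 4" "Nf 3 1 p = \<beta> 3 * \<gamma> 1 * m 3 1" "Nf 3 2 p = \<beta> 3 * \<gamma> 2 * m 3 2" "Nf 3 3 p = \<beta> 3 * \<gamma> 3 * m 3 3" "Nf 3 4 p = \<beta> 3 * \<gamma> 4 * m 3 4" "Nf 4 1 p = \<beta> 4 * \<gamma> 1 * m 4 1" "Nf 4 2 p = \<beta> 4 * \<gamma> 2 * m 4 2" "Nf 4 3 p = \<beta> 4 * \<gamma> 3 * m 4 3" "Nf 4 4 p = \<beta> 4 * \<gamma> 4 * m 4 4"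
    unfolding pv E using n d4 nu by (simp_all add: Nf_def \<beta>_def \<gamma>_def \<nu>_def field_simps)
  have NF0: "\<forall>i\<in>idx. \<forall>j\<in>idx. Nf i j p = \<beta> i * \<gamma> j * m i j"
    unfolding idx4 ball_simps by (intro conjI TrueI NFc)
  have NF: "Nf i j p = \<beta> i * \<gamma> j * m i j" if "i \<in> idx" "j \<in> idx" for i j
    using NF0 that by blast
  have inj: "inj_on (fst F) idx"
  proof -
    have fin: "finite idx" and c: "card idx = 4" by (simp_all add: idx4)
    show ?thesis by (rule eq_card_imp_inj_on[OF fin]) (simp only: TetCfg_D(6)[OF F] c)
  qed
  have sp: "span ((\<lambda>j. (1 / \<gamma> j) *\<^sub>R bv j) ` idx) = UNIV"
  proof -
    have "Basis \<subseteq> span ((\<lambda>j. (1 / \<gamma> j) *\<^sub>R bv j) ` idx)"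
    proof
      fix x :: "real^4" assume "x \<in> Basis"
      then obtain j where j: "j \<in> idx" "x = bv j" using Basis_bv by blast
      have "(1 / \<gamma> j) *\<^sub>R bv j \<in> span ((\<lambda>j. (1 / \<gamma> j) *\<^sub>R bv j) ` idx)"
        using j(1) by (intro span_base) auto
      then have "\<gamma> j *\<^sub>R ((1 / \<gamma> j) *\<^sub>R bv j) \<in> span ((\<lambda>j. (1 / \<gamma> j) *\<^sub>R bv j) ` idx)"
        by (rule span_mul)
      then show "x \<in> span ((\<lambda>j. (1 / \<gamma> j) *\<^sub>R bv j) ` idx)" using gnz[OF j(1)] j(2) by simp
    qed
    then have "span Basis \<subseteq> span ((\<lambda>j. (1 / \<gamma> j) *\<^sub>R bv j) ` idx)"
      by (metis span_mono span_span)
    then show ?thesis by auto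
  qed
  obtain A where A: "invertible A" "\<forall>j\<in>idx. A *v fst F j = (1 / \<gamma> j) *\<^sub>R bv j"
    using exists_matrix[OF TetCfg_D(5)[OF F] inj sp] by blast
  note P = matrix_inv_props[OF A(1)]
  have Ainv: "matrix_inv A *v bv j = \<gamma> j *\<^sub>R fst F j" if j: "j \<in> idx" for j
  proof -
    have "fst F j = matrix_inv A *v (A *v fst F j)" by (simp add: matrix_vector_mul_assoc P)
    also have "\<dots> = (1 / \<gamma> j) *\<^sub>R (matrix_inv A *v bv j)" using A(2) j by (simp add: matrix_vector_mult_scaleR)
    finally have "\<gamma> j *\<^sub>R fst F j = \<gamma> j *\<^sub>R ((1 / \<gamma> j) *\<^sub>R (matrix_inv A *v bv j))" by simp
    then show ?thesis using gnz[OF j] by simp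
  qed
  have X: "\<forall>i\<in>idx. \<gamma> i \<noteq> 0 \<and> \<beta> i \<noteq> 0 \<and>
            fst (Sec p) i = \<gamma> i *\<^sub>R (A *v fst F i) \<and>
            snd (Sec p) i = \<beta> i *\<^sub>R (snd F i v* matrix_inv A)"
  proof
    fix i assume i: "i \<in> idx"
    have 1: "fst (Sec p) i = \<gamma> i *\<^sub>R (A *v fst F i)" using A(2) i gnz[OF i] by (simp add: Sec_def)
    have 2: "snd (Sec p) i = \<beta> i *\<^sub>R (snd F i v* matrix_inv A)"
    proof (rule vec_eq_bv, intro ballI)
      fix j assume j: "j \<in> idx"
      have "(\<beta> i *\<^sub>R (snd F i v* matrix_inv A)) \<bullet> bv j = \<beta> i * (snd F i \<bullet> (matrix_inv A *v bv j))"
        by (simp add: dot_lmul_matrix)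
      also have "\<dots> = \<beta> i * \<gamma> j * m i j" using Ainv[OF j] by (simp add: m_def mm_def)
      also have "\<dots> = Nf i j p" using NF[OF i j] by simp
      finally show "snd (Sec p) i \<bullet> bv j = (\<beta> i *\<^sub>R (snd F i v* matrix_inv A)) \<bullet> bv j"
        using i j by (simp add: Sec_def eta_bv)
    qed
    show "\<gamma> i \<noteq> 0 \<and> \<beta> i \<noteq> 0 \<and> fst (Sec p) i = \<gamma> i *\<^sub>R (A *v fst F i) \<and>
            snd (Sec p) i = \<beta> i *\<^sub>R (snd F i v* matrix_inv A)"
      using gnz[OF i] bnz[OF i] 1 2 by blast
  qed
  show ?thesis unfolding p_def[symmetric] cfg_equiv_def
    apply (rule exI[where x=A])
    apply (rule conjI[OF A(1)])
    apply (rule exI[where x=\<gamma>])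
    apply (rule exI[where x=\<beta>])
    using X .
qed

theorem theorem2p6:
  shows "homeomorphic_map FL_T Dplus_top Psi \<and>
         homeomorphic_map Dplus_top R5pos edge_coords \<and>
         FL_T homeomorphic_space R5pos"
proof -
  have H1: "homeomorphic_map FL_T Dplus_top Psi"
    unfolding homeomorphic_map_maps homeomorphic_maps_def
  proof (intro exI[of _ "cfg_class \<circ> Sec \<circ> edge_coords"] conjI)
    show "continuous_map FL_T Dplus_top Psi" by (rule Psi_cont)
    have q: "continuous_map cfg_top FL_T cfg_class" unfolding FL_T_def by (rule continuous_map_quotient)
    show "continuous_map Dplus_top FL_T (cfg_class \<circ> Sec \<circ> edge_coords)"
      by (rule continuous_map_compose[OF edge_coords_cont continuous_map_compose[OF Sec_cont q]])
    show "\<forall>x\<in>topspace FL_T. (cfg_class \<circ> Sec \<circ> edge_coords) (Psi x) = x"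
    proof
      fix C assume "C \<in> topspace FL_T"
      then obtain F where F: "F \<in> TetCfg" "C = cfg_class F" by (auto simp: topspace_FL_T)
      show "(cfg_class \<circ> Sec \<circ> edge_coords) (Psi C) = C"
        using cfg_class_eq[OF Tet_equiv_Sec[OF F(1)]] Psi_class[OF F(1)] F(2) by simp
    qed
    show "\<forall>y\<in>topspace Dplus_top. Psi ((cfg_class \<circ> Sec \<circ> edge_coords) y) = y"
    proof
      fix d assume d: "d \<in> topspace Dplus_top"
      have e: "edge_coords d \<in> S5"
        using edge_coords_cont d unfolding continuous_map_def topspace_R5pos by blast
      show "Psi ((cfg_class \<circ> Sec \<circ> edge_coords) d) = d"
        using Psi_class[OF Sec_Tet[OF e]] ratios_Sec[OF e] coords_of_edge_coords d
        by (simp add: topspace_Dplus)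
    qed
  qed
  have H2: "homeomorphic_map Dplus_top R5pos edge_coords" by (rule part2)
  have H3: "FL_T homeomorphic_space R5pos"
    unfolding homeomorphic_space using homeomorphic_map_compose[OF H1 H2] by blast
  show ?thesis using H1 H2 H3 by blast
qed

end
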